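(* Let $(\mathfrak L^-,\mathfrak L^+)$ be a $\lambda$-graph bisystem satisfying $\sigma_{\mathfrak L^-}$-condition (I). Then (a) $(X^+_{\mathfrak L^-},\sigma_{\mathfrak L^-})$ is essentially free, and (b) the triple $(\mathcal A_{\mathfrak L^-},\rho^+,\Sigma^+)$ satisfies condition (I): there is a unital increasing sequence $\mathcal A_1\subset\mathcal A_2\subset\cdots$ of $C^*$-subalgebras of $\mathcal A_{\mathfrak L^-}$ with dense union and $\rho^+_\alpha(\mathcal A_l)\subset\mathcal A_{l+1}$ for all $l$ and $\alpha\in\Sigma^+$, such that for all $k\le l$ in $\mathbb N$ there is a projection $q_k^l\in\mathcal D^+_{\mathfrak L^-}$ commuting with every element of $\mathcal A_l$ with $q_k^la\ne0$ for every nonzero $a\in\mathcal A_l$ and $q_k^l\phi^m(q_k^l)=0$ for $m=1,\dots,k$.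
   Context: $\lambda$-graph bisystem over finite alphabets $\Sigma^\pm$: vertices $V=\bigsqcup_{l\ge0}V_l$, $V_l=\{v_1^l,\dots,v_{m(l)}^l\}$; edges $E^-_{l+1,l}$ from $V_{l+1}$ to $V_l$ labeled by $\lambda^-$ in $\Sigma^-$ (right-resolving) and $E^+_{l,l+1}$ from $V_l$ to $V_{l+1}$ labeled by $\lambda^+$ in $\Sigma^+$ (left-resolving); each vertex at level $l\ge1$ is terminal and source of edges of both diagrams to/from neighbouring levels, each vertex of $V_0$ is terminal of an $E^-_{1,0}$-edge and source of an $E^+_{0,1}$-edge; local property: for $u\in V_l,v\in V_{l+2}$ a label-preserving bijection between $\{(e^-,e^+)\in E^-_{l+1,l}\times E^+_{l+1,l+2}:t(e^-)=u,s(e^-)=s(e^+),t(e^+)=v\}$ and $\{(f^+,f^-)\in E^+_{l,l+1}\times E^-_{l+2,l+1}:s(f^+)=u,t(f^+)=t(f^-),s(f^-)=v\}$. $F(u)$ ($u\in V_l$): label words $(\lambda^-(f_l),\dots,\lambda^-(f_1))$ of $E^-$-paths $f_l,\dots,f_1$ from $u$ down to $V_0$. $A^+_{l,l+1}(i,\alpha,j)=1$ iff some $e\in E^+_{l,l+1}$ goes from $v_i^l$ to $v_j^{l+1}$ with label $\alpha$, else $0$. $\Omega_{\mathfrak L^-}$: sequences $\omega=(u_l,\beta_{-l})_{l\ge1}$ with $E^-$-edges $e_l$ from $u_l$ to $u_{l-1}$ labeled $\beta_{-l}$ ($u_0(\omega)$ the terminal of $e_1$); $U_\Omega(v_i^l;\xi)=\{\omega:u_l=v_i^l,(\beta_{-l},\dots,\beta_{-1})=\xi\}$.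 $E^+_{\mathfrak L^-}$: triples $(\omega,\alpha,\omega')$, $\omega=(u_l,\beta_{-l})$, $\omega'=(u'_l,\beta_{-l+1})_{l\ge1}$, with an $E^+_{l,l+1}$-edge from $u_l$ to $u'_{l+1}$ labeled $\alpha$ for every $l\ge0$. $X^+_{\mathfrak L^-}$: sequences $x=(\alpha_i,\omega^i)_{i\ge1}$ with $(\omega^i,\alpha_{i+1},\omega^{i+1})\in E^+_{\mathfrak L^-}$ ($i\ge1$) and a unique $\omega^0=:\omega^0(x)$ with $(\omega^0,\alpha_1,\omega^1)\in E^+_{\mathfrak L^-}$; product topology; $\sigma_{\mathfrak L^-}$ the left shift; $\lambda_i(x)=\alpha_i$. Essentially free: $\{x:\sigma^m_{\mathfrak L^-}x=\sigma^n_{\mathfrak L^-}x\}$ has empty interior whenever $m\ne n$. $U_X(v_i^l;\xi)=\{x:\omega^0(x)\in U_\Omega(v_i^l;\xi)\}$. $\sigma_{\mathfrak L^-}$-condition (I): for all $k\le l$ in $\mathbb N$ there exist points $x_i^l(\xi)\in U_X(v_i^l;\xi)$, for every $i$ and $\xi\in F(v_i^l)$, such that $\sigma^n_{\mathfrak L^-}(x_i^l(\xi))\ne x_j^l(\eta)$ for all $i,j$, all $\xi\in F(v_i^l),\eta\in F(v_j^l)$ and all $n=1,\dots,k$. Algebras: $\mathcal G^+_{\mathfrak L^-}=\{(x,k-l,y):\sigma^kx=\sigma^ly\}$ is the Deaconu–Renault groupoid of $\sigma_{\mathfrak L^-}$, $\mathcal O^+_{\mathfrak L^-}=C^*(\mathcal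 G^+_{\mathfrak L^-})$, $\mathcal D^+_{\mathfrak L^-}=C(X^+_{\mathfrak L^-})\subset\mathcal O^+_{\mathfrak L^-}$ (functions on the unit space). $S_\alpha$ ($\alpha\in\Sigma^+$) is the characteristic function of $\{(x,1,\sigma_{\mathfrak L^-}x):\lambda_1(x)=\alpha\}$; $S_\mu=S_{\mu_1}\cdots S_{\mu_m}$; $E_i^{l-}(\xi)$ is the characteristic function of $\{(x,0,x):x\in U_X(v_i^l;\xi)\}$; $\mathcal A_{\mathfrak L^-}$ is the $C^*$-subalgebra generated by all $E_i^{l-}(\xi)$; $\rho^+_\alpha\in\mathrm{End}(\mathcal A_{\mathfrak L^-})$ is given by $\rho^+_\alpha(E_i^{l-}(\xi))=\sum_{\beta\in\Sigma^-}\sum_jA^+_{l,l+1}(i,\alpha,j)E_j^{l+1-}(\xi\beta)$ (equivalently $\rho^+_\alpha(a)=S_\alpha^*aS_\alpha$), with $E_j^{l+1-}(\xi\beta)=0$ if $\xi\beta\notin F(v_j^{l+1})$; $\phi^m(X)=\sum_{\mu}S_\mu XS_\mu^*$, sum over all words $\mu$ of length $m$ in the subshift presented by $\mathfrak L^+$ (label words of $E^+$-paths). *)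

theory Defs
  imports "HOL-Analysis.Analysis"
begin

(* Encoding conventions:
   V_l = {0..<m l}  (index i stands for v_{i+?}; we use 0-based indices i < m l).
   Em l i b j  : there is an edge of E^-_{l+1,l} from v_i^{l+1} to v_j^l labeled b.
   Ep l i a j  : there is an edge of E^+_{l,l+1} from v_i^l to v_j^{l+1} labeled a.
   Because E^- is right-resolving and E^+ is left-resolving, there is at most one
   edge with given source, terminal and label, so edges are faithfully encoded by
   these relations. *)

definition lambda_bisystem ::
  "(nat \<Rightarrow> nat) \<Rightarrow> (nat \<Rightarrow> nat \<Rightarrow> 'a \<Rightarrow> nat \<Rightarrow> bool) \<Rightarrow> (nat \<Rightarrow> nat \<Rightarrow> 'b \<Rightarrow> nat \<Rightarrow> bool) \<Rightarrow> bool" where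
  "lambda_bisystem m Em Ep \<longleftrightarrow>
     (\<forall>l i b j. Em l i b j \<longrightarrow> i < m (Suc l) \<and> j < m l) \<and>
     (\<forall>l i a j. Ep l i a j \<longrightarrow> i < m l \<and> j < m (Suc l)) \<and>
     (\<forall>l i b j j'. Em l i b j \<and> Em l i b j' \<longrightarrow> j = j') \<and>
     (\<forall>l i i' a j. Ep l i a j \<and> Ep l i' a j \<longrightarrow> i = i') \<and>
     (\<forall>l v. v < m l \<longrightarrow> (\<exists>w b. Em l w b v) \<and> (\<exists>w a. Ep l v a w)) \<and>
     (\<forall>l v. v < m (Suc l) \<longrightarrow> (\<exists>w b. Em l v b w) \<and> (\<exists>w a. Ep l w a v)) \<and>
     (\<forall>l u v a b. u < m l \<longrightarrow> v < m (Suc (Suc l)) \<longrightarrow>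
        card {w. Em l w b u \<and> Ep (Suc l) w a v} = card {w. Ep l u a w \<and> Em (Suc l) v b w})"

(* omega = (u, beta): u l = u_l (l \<ge> 0, u 0 = u_0(omega)), beta n = beta_{-(n+1)} *)
type_synonym 'a omg = "(nat \<Rightarrow> nat) \<times> (nat \<Rightarrow> 'a)"
(* x n = (alpha_{n+1}, omega^{n+1}) *)
type_synonym ('a, 'b) pt = "nat \<Rightarrow> 'b \<times> 'a omg"

definition Omega :: "(nat \<Rightarrow> nat) \<Rightarrow> (nat \<Rightarrow> nat \<Rightarrow> 'a \<Rightarrow> nat \<Rightarrow> bool) \<Rightarrow> 'a omg set" where
  "Omega m Em = {(u, b). \<forall>l. u l < m l \<and> Em l (u (Suc l)) (b l) (u l)}"

definition EplusL :: "(nat \<Rightarrow> nat \<Rightarrow> 'b \<Rightarrow> nat \<Rightarrow> bool) \<Rightarrow> 'a omg \<Rightarrow> 'b \<Rightarrow> 'a omg \<Rightarrow> bool" where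
  "EplusL Ep w a w' \<longleftrightarrow>
     (\<forall>l. Ep l (fst w l) a (fst w' (Suc l))) \<and> (\<forall>n. snd w' (Suc n) = snd w n)"

definition Xplus :: "(nat \<Rightarrow> nat) \<Rightarrow> (nat \<Rightarrow> nat \<Rightarrow> 'a \<Rightarrow> nat \<Rightarrow> bool) \<Rightarrow> (nat \<Rightarrow> nat \<Rightarrow> 'b \<Rightarrow> nat \<Rightarrow> bool) \<Rightarrow> ('a, 'b) pt set" where
  "Xplus m Em Ep = {x. (\<forall>n. snd (x n) \<in> Omega m Em) \<and>
      (\<forall>n. EplusL Ep (snd (x n)) (fst (x (Suc n))) (snd (x (Suc n)))) \<and>
      (\<exists>!w. w \<in> Omega m Em \<and> EplusL Ep w (fst (x 0)) (snd (x 0)))}"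

definition omega0 :: "(nat \<Rightarrow> nat) \<Rightarrow> (nat \<Rightarrow> nat \<Rightarrow> 'a \<Rightarrow> nat \<Rightarrow> bool) \<Rightarrow> (nat \<Rightarrow> nat \<Rightarrow> 'b \<Rightarrow> nat \<Rightarrow> bool) \<Rightarrow> ('a, 'b) pt \<Rightarrow> 'a omg" where
  "omega0 m Em Ep x = (THE w. w \<in> Omega m Em \<and> EplusL Ep w (fst (x 0)) (snd (x 0)))"

definition shift :: "('a, 'b) pt \<Rightarrow> ('a, 'b) pt" where
  "shift x = (\<lambda>n. x (Suc n))"

definition Xtop :: "(nat \<Rightarrow> nat) \<Rightarrow> (nat \<Rightarrow> nat \<Rightarrow> 'a \<Rightarrow> nat \<Rightarrow> bool) \<Rightarrow> (nat \<Rightarrow> nat \<Rightarrow> 'b \<Rightarrow> nat \<Rightarrow> bool) \<Rightarrow> ('a, 'b) pt topology" where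
  "Xtop m Em Ep = subtopology
     (product_topology (\<lambda>_. prod_topology (discrete_topology UNIV)
        (prod_topology (product_topology (\<lambda>_. discrete_topology UNIV) UNIV)
                       (product_topology (\<lambda>_. discrete_topology UNIV) UNIV))) UNIV)
     (Xplus m Em Ep)"

definition essentially_free :: "(nat \<Rightarrow> nat) \<Rightarrow> (nat \<Rightarrow> nat \<Rightarrow> 'a \<Rightarrow> nat \<Rightarrow> bool) \<Rightarrow> (nat \<Rightarrow> nat \<Rightarrow> 'b \<Rightarrow> nat \<Rightarrow> bool) \<Rightarrow> bool" where
  "essentially_free m Em Ep \<longleftrightarrow>
     (\<forall>p q. p \<noteq> q \<longrightarrow>
        Xtop m Em Ep interior_of {x \<in> Xplus m Em Ep. (shift ^^ p) x = (shift ^^ q) x} = {})"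

definition Fw :: "(nat \<Rightarrow> nat) \<Rightarrow> (nat \<Rightarrow> nat \<Rightarrow> 'a \<Rightarrow> nat \<Rightarrow> bool) \<Rightarrow> nat \<Rightarrow> nat \<Rightarrow> 'a list set" where
  "Fw m Em l i = {xi. length xi = l \<and> (\<exists>w. w l = i \<and>
      (\<forall>k<l. w k < m k \<and> Em k (w (Suc k)) (xi ! (l - Suc k)) (w k)))}"

definition U_Omega :: "(nat \<Rightarrow> nat) \<Rightarrow> (nat \<Rightarrow> nat \<Rightarrow> 'a \<Rightarrow> nat \<Rightarrow> bool) \<Rightarrow> nat \<Rightarrow> nat \<Rightarrow> 'a list \<Rightarrow> 'a omg set" where
  "U_Omega m Em l i xi = {w \<in> Omega m Em. fst w l = i \<and> xi = rev (map (snd w) [0..<l])}"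

definition U_X :: "(nat \<Rightarrow> nat) \<Rightarrow> (nat \<Rightarrow> nat \<Rightarrow> 'a \<Rightarrow> nat \<Rightarrow> bool) \<Rightarrow> (nat \<Rightarrow> nat \<Rightarrow> 'b \<Rightarrow> nat \<Rightarrow> bool) \<Rightarrow> nat \<Rightarrow> nat \<Rightarrow> 'a list \<Rightarrow> ('a, 'b) pt set" where
  "U_X m Em Ep l i xi = {x \<in> Xplus m Em Ep. omega0 m Em Ep x \<in> U_Omega m Em l i xi}"

definition sigma_condI :: "(nat \<Rightarrow> nat) \<Rightarrow> (nat \<Rightarrow> nat \<Rightarrow> 'a \<Rightarrow> nat \<Rightarrow> bool) \<Rightarrow> (nat \<Rightarrow> nat \<Rightarrow> 'b \<Rightarrow> nat \<Rightarrow> bool) \<Rightarrow> bool" where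
  "sigma_condI m Em Ep \<longleftrightarrow>
     (\<forall>k l. 1 \<le> k \<and> k \<le> l \<longrightarrow>
        (\<exists>pts. (\<forall>i<m l. \<forall>xi\<in>Fw m Em l i. pts i xi \<in> U_X m Em Ep l i xi) \<and>
               (\<forall>i<m l. \<forall>j<m l. \<forall>xi\<in>Fw m Em l i. \<forall>eta\<in>Fw m Em l j. \<forall>n\<in>{1..k}.
                   (shift ^^ n) (pts i xi) \<noteq> pts j eta)))"

definition CX :: "(nat \<Rightarrow> nat) \<Rightarrow> (nat \<Rightarrow> nat \<Rightarrow> 'a \<Rightarrow> nat \<Rightarrow> bool) \<Rightarrow> (nat \<Rightarrow> nat \<Rightarrow> 'b \<Rightarrow> nat \<Rightarrow> bool) \<Rightarrow> (('a, 'b) pt \<Rightarrow> complex) set" where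
  "CX m Em Ep = {f. continuous_map (Xtop m Em Ep) euclidean f \<and> (\<forall>x. x \<notin> Xplus m Em Ep \<longrightarrow> f x = 0)}"

definition cstar_sub :: "(nat \<Rightarrow> nat) \<Rightarrow> (nat \<Rightarrow> nat \<Rightarrow> 'a \<Rightarrow> nat \<Rightarrow> bool) \<Rightarrow> (nat \<Rightarrow> nat \<Rightarrow> 'b \<Rightarrow> nat \<Rightarrow> bool) \<Rightarrow> (('a, 'b) pt \<Rightarrow> complex) set \<Rightarrow> bool" where
  "cstar_sub m Em Ep B \<longleftrightarrow> B \<subseteq> CX m Em Ep \<and> (\<lambda>_. 0) \<in> B \<and>
     (\<forall>f\<in>B. \<forall>g\<in>B. (\<lambda>x. f x + g x) \<in> B \<and> (\<lambda>x. f x * g x) \<in> B) \<and>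
     (\<forall>c. \<forall>f\<in>B. (\<lambda>x. c * f x) \<in> B) \<and>
     (\<forall>f\<in>B. (\<lambda>x. cnj (f x)) \<in> B) \<and>
     (\<forall>f\<in>CX m Em Ep. (\<forall>e>0. \<exists>g\<in>B. \<forall>x\<in>Xplus m Em Ep. cmod (f x - g x) < e) \<longrightarrow> f \<in> B)"

definition Eproj :: "(nat \<Rightarrow> nat) \<Rightarrow> (nat \<Rightarrow> nat \<Rightarrow> 'a \<Rightarrow> nat \<Rightarrow> bool) \<Rightarrow> (nat \<Rightarrow> nat \<Rightarrow> 'b \<Rightarrow> nat \<Rightarrow> bool) \<Rightarrow> nat \<Rightarrow> nat \<Rightarrow> 'a list \<Rightarrow> ('a, 'b) pt \<Rightarrow> complex" where
  "Eproj m Em Ep l i xi = (\<lambda>x. if x \<in> U_X m Em Ep l i xi then 1 else 0)"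

definition A_L :: "(nat \<Rightarrow> nat) \<Rightarrow> (nat \<Rightarrow> nat \<Rightarrow> 'a \<Rightarrow> nat \<Rightarrow> bool) \<Rightarrow> (nat \<Rightarrow> nat \<Rightarrow> 'b \<Rightarrow> nat \<Rightarrow> bool) \<Rightarrow> (('a, 'b) pt \<Rightarrow> complex) set" where
  "A_L m Em Ep = \<Inter>{B. cstar_sub m Em Ep B \<and>
      {Eproj m Em Ep l i xi | l i xi. i < m l \<and> xi \<in> Fw m Em l i} \<subseteq> B}"

definition unitX :: "(nat \<Rightarrow> nat) \<Rightarrow> (nat \<Rightarrow> nat \<Rightarrow> 'a \<Rightarrow> nat \<Rightarrow> bool) \<Rightarrow> (nat \<Rightarrow> nat \<Rightarrow> 'b \<Rightarrow> nat \<Rightarrow> bool) \<Rightarrow> ('a, 'b) pt \<Rightarrow> complex" where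
  "unitX m Em Ep = (\<lambda>x. if x \<in> Xplus m Em Ep then 1 else 0)"

(* rho^+_alpha(a) = S_alpha^* a S_alpha, computed in the groupoid algebra *)
definition rho :: "(nat \<Rightarrow> nat) \<Rightarrow> (nat \<Rightarrow> nat \<Rightarrow> 'a \<Rightarrow> nat \<Rightarrow> bool) \<Rightarrow> (nat \<Rightarrow> nat \<Rightarrow> 'b \<Rightarrow> nat \<Rightarrow> bool) \<Rightarrow> 'b \<Rightarrow> (('a, 'b) pt \<Rightarrow> complex) \<Rightarrow> ('a, 'b) pt \<Rightarrow> complex" where
  "rho m Em Ep a f = (\<lambda>y. if y \<in> Xplus m Em Ep
      then (\<Sum>x\<in>{x \<in> Xplus m Em Ep. shift x = y \<and> fst (x 0) = a}. f x) else 0)"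

definition Lplus_words :: "(nat \<Rightarrow> nat \<Rightarrow> 'b \<Rightarrow> nat \<Rightarrow> bool) \<Rightarrow> nat \<Rightarrow> 'b list set" where
  "Lplus_words Ep n = {mu. length mu = n \<and>
      (\<exists>l w. \<forall>k<n. Ep (l + k) (w k) (mu ! k) (w (Suc k)))}"

(* phi^n(q) = sum_mu S_mu q S_mu^*, computed in the groupoid algebra *)
definition phi :: "(nat \<Rightarrow> nat) \<Rightarrow> (nat \<Rightarrow> nat \<Rightarrow> 'a \<Rightarrow> nat \<Rightarrow> bool) \<Rightarrow> (nat \<Rightarrow> nat \<Rightarrow> 'b \<Rightarrow> nat \<Rightarrow> bool) \<Rightarrow> nat \<Rightarrow> (('a, 'b) pt \<Rightarrow> complex) \<Rightarrow> ('a, 'b) pt \<Rightarrow> complex" where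
  "phi m Em Ep n q = (\<lambda>x. if x \<in> Xplus m Em Ep
      then (\<Sum>mu\<in>Lplus_words Ep n.
              if map (\<lambda>k. fst (x k)) [0..<n] = mu then q ((shift ^^ n) x) else 0)
      else 0)"

definition projD :: "(nat \<Rightarrow> nat) \<Rightarrow> (nat \<Rightarrow> nat \<Rightarrow> 'a \<Rightarrow> nat \<Rightarrow> bool) \<Rightarrow> (nat \<Rightarrow> nat \<Rightarrow> 'b \<Rightarrow> nat \<Rightarrow> bool) \<Rightarrow> (('a, 'b) pt \<Rightarrow> complex) \<Rightarrow> bool" where
  "projD m Em Ep q \<longleftrightarrow> q \<in> CX m Em Ep \<and> (\<forall>x. q x * q x = q x \<and> cnj (q x) = q x)"

definition triple_condI :: "(nat \<Rightarrow> nat) \<Rightarrow> (nat \<Rightarrow> nat \<Rightarrow> 'a \<Rightarrow> nat \<Rightarrow> bool) \<Rightarrow> (nat \<Rightarrow> nat \<Rightarrow> 'b \<Rightarrow> nat \<Rightarrow> bool) \<Rightarrow> bool" where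
  "triple_condI m Em Ep \<longleftrightarrow>
    (\<exists>A :: nat \<Rightarrow> (('a, 'b) pt \<Rightarrow> complex) set.
       (\<forall>l\<ge>1. cstar_sub m Em Ep (A l) \<and> A l \<subseteq> A_L m Em Ep \<and> unitX m Em Ep \<in> A l \<and> A l \<subseteq> A (Suc l)) \<and>
       (\<forall>f\<in>A_L m Em Ep. \<forall>e>0. \<exists>l\<ge>1. \<exists>g\<in>A l. \<forall>x\<in>Xplus m Em Ep. cmod (f x - g x) < e) \<and>
       (\<forall>l\<ge>1. \<forall>a. \<forall>f\<in>A l. rho m Em Ep a f \<in> A (Suc l)) \<and>
       (\<forall>k l. 1 \<le> k \<and> k \<le> l \<longrightarrow>
          (\<exists>q. projD m Em Ep q \<and>
               (\<forall>f\<in>A l. \<forall>x. q x * f x = f x * q x) \<and>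
               (\<forall>f\<in>A l. f \<noteq> (\<lambda>_. 0) \<longrightarrow> (\<lambda>x. q x * f x) \<noteq> (\<lambda>_. 0)) \<and>
               (\<forall>n\<in>{1..k}. \<forall>x. q x * phi m Em Ep n q x = 0))))"

end

theory Submission
  imports Defs
begin

definition pre :: "(nat \<Rightarrow> nat) \<Rightarrow> (nat \<Rightarrow> nat \<Rightarrow> 'a \<Rightarrow> nat \<Rightarrow> bool) \<Rightarrow> (nat \<Rightarrow> nat \<Rightarrow> 'b \<Rightarrow> nat \<Rightarrow> bool) \<Rightarrow> 'b \<Rightarrow> ('a, 'b) pt \<Rightarrow> ('a, 'b) pt" where
  "pre m Em Ep a y = (\<lambda>n. case n of 0 \<Rightarrow> (a, omega0 m Em Ep y) | Suc k \<Rightarrow> y k)"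

definition cellrel :: "nat \<Rightarrow> 'a omg \<Rightarrow> 'a omg \<Rightarrow> bool" where
  "cellrel L w w' \<longleftrightarrow> fst w L = fst w' L \<and> (\<forall>n<L. snd w n = snd w' n)"

definition adm :: "(nat \<Rightarrow> nat \<Rightarrow> 'b \<Rightarrow> nat \<Rightarrow> bool) \<Rightarrow> 'b \<Rightarrow> 'a omg \<Rightarrow> bool" where
  "adm Ep a w \<longleftrightarrow> (\<exists>u. Ep 0 u a (fst w 1))"

lemma shift_pow_apply: "(shift ^^ n) x i = x (i + n)"
  by (induction n arbitrary: i) (auto simp: shift_def)

lemma EplusL_unique:
  assumes lb: "lambda_bisystem m Em Ep"
    and "EplusL Ep w a w'" "EplusL Ep v a w'"
  shows "w = v"
proof -
  have "fst w l = fst v l" for l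
  proof -
    have "Ep l (fst w l) a (fst w' (Suc l))" "Ep l (fst v l) a (fst w' (Suc l))"
      using assms(2,3) unfolding EplusL_def by blast+
    then show ?thesis using lb unfolding lambda_bisystem_def by blast
  qed
  moreover have "snd w n = snd v n" for n
    using assms unfolding EplusL_def by metis
  ultimately show ?thesis by (simp add: prod_eq_iff fun_eq_iff)
qed

context
  fixes m :: "nat \<Rightarrow> nat"
    and Em :: "nat \<Rightarrow> nat \<Rightarrow> 'a::finite \<Rightarrow> nat \<Rightarrow> bool"
    and Ep :: "nat \<Rightarrow> nat \<Rightarrow> 'b::finite \<Rightarrow> nat \<Rightarrow> bool"
  assumes lb: "lambda_bisystem m Em Ep"
begin

lemmas lbA = lb[unfolded lambda_bisystem_def]
lemmas lbD = lbA[THEN conjunct1] lbA[THEN conjunct2, THEN conjunct1]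
  lbA[THEN conjunct2, THEN conjunct2, THEN conjunct1]
  lbA[THEN conjunct2, THEN conjunct2, THEN conjunct2, THEN conjunct1]
  lbA[THEN conjunct2, THEN conjunct2, THEN conjunct2, THEN conjunct2, THEN conjunct1]
  lbA[THEN conjunct2, THEN conjunct2, THEN conjunct2, THEN conjunct2, THEN conjunct2, THEN conjunct1]
  lbA[THEN conjunct2, THEN conjunct2, THEN conjunct2, THEN conjunct2, THEN conjunct2, THEN conjunct2]

lemma Em_fun: "Em l i b j \<Longrightarrow> Em l i b j' \<Longrightarrow> j = j'"
  using lbD(3) by blast
lemma Ep_inj: "Ep l i a j \<Longrightarrow> Ep l i' a j \<Longrightarrow> i = i'"
  using lbD(4) by blast
lemma Ep_bnd: "Ep l i a j \<Longrightarrow> i < m l \<and> j < m (Suc l)"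
  using lbD(2) by blast
lemma Em_bnd: "Em l i b j \<Longrightarrow> i < m (Suc l) \<and> j < m l"
  using lbD(1) by blast
lemma local_prop: "u < m l \<Longrightarrow> v < m (Suc (Suc l)) \<Longrightarrow>
   card {w. Em l w b u \<and> Ep (Suc l) w a v} = card {w. Ep l u a w \<and> Em (Suc l) v b w}"
  using lbD(7) by blast

lemma X_iff: "x \<in> Xplus m Em Ep \<longleftrightarrow> (\<forall>n. snd (x n) \<in> Omega m Em) \<and>
      (\<forall>n. EplusL Ep (snd (x n)) (fst (x (Suc n))) (snd (x (Suc n)))) \<and>
      (\<exists>w\<in>Omega m Em. EplusL Ep w (fst (x 0)) (snd (x 0)))"
proof -
  have "(\<exists>!w. w \<in> Omega m Em \<and> EplusL Ep w a v) \<longleftrightarrow> (\<exists>w\<in>Omega m Em. EplusL Ep w a v)" for a v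
    using EplusL_unique[OF lb] by blast
  then show ?thesis unfolding Xplus_def by blast
qed

lemma w0_prop:
  assumes "x \<in> Xplus m Em Ep"
  shows "omega0 m Em Ep x \<in> Omega m Em \<and> EplusL Ep (omega0 m Em Ep x) (fst (x 0)) (snd (x 0))"
proof -
  have "\<exists>!w. w \<in> Omega m Em \<and> EplusL Ep w (fst (x 0)) (snd (x 0))"
    using assms unfolding Xplus_def by blast
  then show ?thesis unfolding omega0_def by (rule theI')
qed

lemma w0_eq:
  assumes "x \<in> Xplus m Em Ep" "EplusL Ep w (fst (x 0)) (snd (x 0))"
  shows "omega0 m Em Ep x = w"
  using w0_prop[OF assms(1)] assms(2) EplusL_unique[OF lb] by blast

lemma shift_X:
  assumes "x \<in> Xplus m Em Ep"
  shows "shift x \<in> Xplus m Em Ep \<and> omega0 m Em Ep (shift x) = snd (x 0)"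
proof -
  have s: "shift x \<in> Xplus m Em Ep"
    using assms unfolding X_iff by (auto simp: shift_def)
  moreover have "omega0 m Em Ep (shift x) = snd (x 0)"
    using assms unfolding X_iff by (intro w0_eq[OF s]) (auto simp: shift_def)
  ultimately show ?thesis by blast
qed

lemma shiftpow_X: "x \<in> Xplus m Em Ep \<Longrightarrow> (shift ^^ n) x \<in> Xplus m Em Ep"
  by (induction n) (auto simp: shift_X)

lemma w0_shiftpow:
  assumes "x \<in> Xplus m Em Ep"
  shows "omega0 m Em Ep ((shift ^^ Suc i) x) = snd (x i)"
proof -
  have "omega0 m Em Ep (shift ((shift ^^ i) x)) = snd (((shift ^^ i) x) 0)"
    using shift_X[OF shiftpow_X[OF assms]] by blast
  then show ?thesis by (simp add: shift_pow_apply)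
qed

lemma cell_down:
  assumes "w \<in> Omega m Em" "w' \<in> Omega m Em" "cellrel L w w'" "L' \<le> L"
  shows "cellrel L' w w'"
proof -
  have "fst w (L - j) = fst w' (L - j)" if "j \<le> L" for j
    using that
  proof (induction j)
    case 0 then show ?case using assms(3) by (simp add: cellrel_def)
  next
    case (Suc j)
    define k where "k = L - Suc j"
    have Lk: "L - j = Suc k" using Suc.prems k_def by simp
    have e1: "Em k (fst w (Suc k)) (snd w k) (fst w k)" using assms(1) by (simp add: Omega_def split_beta)
    have e2: "Em k (fst w' (Suc k)) (snd w' k) (fst w' k)" using assms(2) by (simp add: Omega_def split_beta)
    have "snd w k = snd w' k" using assms(3) Suc.prems k_def by (simp add: cellrel_def)
    moreover have "fst w (Suc k) = fst w' (Suc k)" using Suc Lk by simp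
    ultimately show ?case using e1 e2 Em_fun k_def by metis
  qed
  then have "fst w L' = fst w' L'" using assms(4)
    by (metis diff_diff_cancel diff_le_self)
  then show ?thesis using assms(3,4) by (simp add: cellrel_def)
qed

lemma cell_pre:
  assumes "EplusL Ep v a w" "EplusL Ep v' a w'" "cellrel (Suc L) w w'"
  shows "cellrel L v v'"
proof -
  have "Ep L (fst v L) a (fst w (Suc L))" "Ep L (fst v' L) a (fst w' (Suc L))"
    using assms(1,2) by (auto simp: EplusL_def)
  then have "fst v L = fst v' L" using assms(3) Ep_inj by (simp add: cellrel_def)
  moreover have "snd v n = snd v' n" if "n < L" for n
    using assms that by (auto simp: EplusL_def cellrel_def)
  ultimately show ?thesis by (simp add: cellrel_def)
qed

end

context
  fixes m :: "nat \<Rightarrow> nat"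
    and Em :: "nat \<Rightarrow> nat \<Rightarrow> 'a::finite \<Rightarrow> nat \<Rightarrow> bool"
    and Ep :: "nat \<Rightarrow> nat \<Rightarrow> 'b::finite \<Rightarrow> nat \<Rightarrow> bool"
  assumes lb: "lambda_bisystem m Em Ep"
begin

lemma ext_lemma:
  assumes om: "w \<in> Omega m Em" and u0: "Ep 0 u0 a (fst w 1)"
  shows "\<exists>v\<in>Omega m Em. EplusL Ep v a w"
proof -
  define P where "P = (\<lambda>L uL x. Em L x (snd w (Suc L)) uL \<and> Ep (Suc L) x a (fst w (Suc (Suc L))))"
  define u where "u = rec_nat u0 (\<lambda>L uL. SOME x. P L uL x)"
  have u0': "u 0 = u0" and uS: "\<And>L. u (Suc L) = (SOME x. P L (u L) x)"
    unfolding u_def by simp_all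
  have omL: "fst w L < m L \<and> Em L (fst w (Suc L)) (snd w L) (fst w L)" for L
    using om by (simp add: Omega_def split_beta)
  have ex: "\<exists>x. P L (u L) x" if IH: "Ep L (u L) a (fst w (Suc L))" for L
  proof -
    define R where "R = {x. Ep L (u L) a x \<and> Em (Suc L) (fst w (Suc (Suc L))) (snd w (Suc L)) x}"
    have "fst w (Suc L) \<in> R" using IH omL[of "Suc L"] by (simp add: R_def)
    moreover have "R \<subseteq> {..<m (Suc L)}" using Ep_bnd[OF lb] by (auto simp: R_def)
    ultimately have "card R > 0"
      by (metis card_gt_0_iff empty_iff finite_lessThan finite_subset)
    moreover have "card {x. Em L x (snd w (Suc L)) (u L) \<and> Ep (Suc L) x a (fst w (Suc (Suc L)))} = card R"
      unfolding R_def
      by (rule local_prop[OF lb]) (use IH Ep_bnd[OF lb] omL in auto)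
    ultimately have "{x. Em L x (snd w (Suc L)) (u L) \<and> Ep (Suc L) x a (fst w (Suc (Suc L)))} \<noteq> {}"
      by (metis card.empty less_irrefl)
    then show ?thesis by (auto simp: P_def)
  qed
  have inv: "Ep L (u L) a (fst w (Suc L))" for L
  proof (induction L)
    case 0 then show ?case using u0 u0' by simp
  next
    case (Suc L)
    have "P L (u L) (u (Suc L))" unfolding uS using someI_ex[OF ex[OF Suc]] .
    then show ?case by (simp add: P_def)
  qed
  have PL: "P L (u L) (u (Suc L))" for L
    unfolding uS using someI_ex[OF ex[OF inv]] .
  define v where "v = (u, \<lambda>n. snd w (Suc n))"
  have "v \<in> Omega m Em"
    unfolding v_def Omega_def using PL inv Ep_bnd[OF lb] by (auto simp: P_def) blast
  moreover have "EplusL Ep v a w"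
    unfolding v_def EplusL_def using inv by simp
  ultimately show ?thesis by blast
qed

lemma pre_X:
  assumes y: "y \<in> Xplus m Em Ep" and ad: "adm Ep a (omega0 m Em Ep y)"
  shows "pre m Em Ep a y \<in> Xplus m Em Ep"
    and "EplusL Ep (omega0 m Em Ep (pre m Em Ep a y)) a (omega0 m Em Ep y)"
    and "omega0 m Em Ep (pre m Em Ep a y) \<in> Omega m Em"
proof -
  have w: "omega0 m Em Ep y \<in> Omega m Em" "EplusL Ep (omega0 m Em Ep y) (fst (y 0)) (snd (y 0))"
    using w0_prop[OF lb y] by auto
  obtain v where v: "v \<in> Omega m Em" "EplusL Ep v a (omega0 m Em Ep y)"
    using ext_lemma[OF w(1)] ad unfolding adm_def by blast
  have yy: "(\<forall>n. snd (y n) \<in> Omega m Em) \<and> (\<forall>n. EplusL Ep (snd (y n)) (fst (y (Suc n))) (snd (y (Suc n))))"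
    using y X_iff[OF lb] by blast
  have P: "pre m Em Ep a y \<in> Xplus m Em Ep"
    unfolding X_iff[OF lb]
  proof (intro conjI allI)
    fix n show "snd (pre m Em Ep a y n) \<in> Omega m Em"
      using w yy by (cases n) (auto simp: pre_def)
  next
    fix n show "EplusL Ep (snd (pre m Em Ep a y n)) (fst (pre m Em Ep a y (Suc n))) (snd (pre m Em Ep a y (Suc n)))"
      using w yy by (cases n) (auto simp: pre_def)
  next
    show "\<exists>w\<in>Omega m Em. EplusL Ep w (fst (pre m Em Ep a y 0)) (snd (pre m Em Ep a y 0))"
      using v by (auto simp: pre_def)
  qed
  have "omega0 m Em Ep (pre m Em Ep a y) = v"
    by (rule w0_eq[OF lb P]) (use v in \<open>simp add: pre_def\<close>)
  then show "pre m Em Ep a y \<in> Xplus m Em Ep"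
    and "EplusL Ep (omega0 m Em Ep (pre m Em Ep a y)) a (omega0 m Em Ep y)"
    and "omega0 m Em Ep (pre m Em Ep a y) \<in> Omega m Em" using P v by auto
qed

lemma shift_pre: "shift (pre m Em Ep a y) = y"
  by (simp add: shift_def pre_def)

lemma pre_0: "fst (pre m Em Ep a y 0) = a"
  by (simp add: pre_def)

lemma X_pre_eq:
  assumes x: "x \<in> Xplus m Em Ep"
  shows "x = pre m Em Ep (fst (x 0)) (shift x)"
proof -
  have "omega0 m Em Ep (shift x) = snd (x 0)" using shift_X[OF lb x] by blast
  then show ?thesis
    by (auto simp: fun_eq_iff pre_def shift_def split: nat.split)
qed

lemma adm_X:
  assumes x: "x \<in> Xplus m Em Ep"
  shows "adm Ep (fst (x 0)) (omega0 m Em Ep (shift x))"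
proof -
  have "omega0 m Em Ep (shift x) = snd (x 0)" using shift_X[OF lb x] by blast
  moreover have "EplusL Ep (omega0 m Em Ep x) (fst (x 0)) (snd (x 0))" using w0_prop[OF lb x] by blast
  ultimately show ?thesis unfolding adm_def EplusL_def
    by (metis One_nat_def)
qed

lemma adm_cell:
  assumes "w \<in> Omega m Em" "w' \<in> Omega m Em" "cellrel L w w'" "1 \<le> L" "adm Ep a w"
  shows "adm Ep a w'"
  using cell_down[OF lb assms(1-3) assms(4)] assms(5) by (simp add: adm_def cellrel_def)

end

definition Tbig :: "('a, 'b) pt topology" where
  "Tbig = product_topology (\<lambda>_. prod_topology (discrete_topology UNIV)
        (prod_topology (product_topology (\<lambda>_. discrete_topology UNIV) UNIV)
                       (product_topology (\<lambda>_. discrete_topology UNIV) UNIV))) UNIV"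

lemma Xtop_eq: "Xtop m Em Ep = subtopology Tbig (Xplus m Em Ep)"
  unfolding Xtop_def Tbig_def ..

definition agr :: "nat \<Rightarrow> ('a, 'b) pt \<Rightarrow> ('a, 'b) pt \<Rightarrow> bool" where
  "agr d x z \<longleftrightarrow> (\<forall>i<d. fst (z i) = fst (x i) \<and>
      (\<forall>n<d. fst (snd (z i)) n = fst (snd (x i)) n \<and> snd (snd (z i)) n = snd (snd (x i)) n))"

lemma agr_refl: "agr d x x" by (simp add: agr_def)
lemma agr_sym: "agr d x z \<Longrightarrow> agr d z x" by (simp add: agr_def)
lemma agr_trans: "agr d x y \<Longrightarrow> agr d y z \<Longrightarrow> agr d x z" by (simp add: agr_def)
lemma agr_mono: "agr d x z \<Longrightarrow> d' \<le> d \<Longrightarrow> agr d' x z" by (simp add: agr_def)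

lemma agr_shift: "agr d x z \<Longrightarrow> agr (d - n) ((shift ^^ n) x) ((shift ^^ n) z)"
  by (simp add: agr_def shift_pow_apply)

lemma topspace_fun_disc [simp]: "topspace (product_topology (\<lambda>_. discrete_topology UNIV) UNIV) = UNIV"
  by (simp add: PiE_UNIV_domain)

lemma nat_le_sum: "finite A \<Longrightarrow> i \<in> A \<Longrightarrow> (f i::nat) \<le> sum f A"
  by (metis sum.remove le_add1)

lemma topspace_mid [simp]: "topspace (prod_topology (discrete_topology UNIV)
        (prod_topology (product_topology (\<lambda>_. discrete_topology UNIV) (UNIV::nat set))
                       (product_topology (\<lambda>_. discrete_topology UNIV) UNIV))) = UNIV"
  by simp

lemma topspace_Tbig [simp]: "topspace Tbig = UNIV"
  by (simp add: Tbig_def PiE_UNIV_domain)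

lemma fun_open:
  assumes "openin (product_topology (\<lambda>_. discrete_topology UNIV) (UNIV::nat set)) V" "f \<in> V"
  shows "\<exists>d. \<forall>g. (\<forall>n<d. g n = f n) \<longrightarrow> g \<in> V"
proof -
  obtain U where U: "finite {i. U i \<noteq> UNIV}" "f \<in> PiE UNIV U" "PiE UNIV U \<subseteq> V"
    using assms unfolding openin_product_topology_alt by auto
  define J where "J = {i. U i \<noteq> UNIV}"
  have "\<forall>n<Suc (\<Sum>J). g n = f n \<Longrightarrow> g \<in> V" for g
  proof -
    assume h: "\<forall>n<Suc (\<Sum>J). g n = f n"
    have "g i \<in> U i" for i
    proof (cases "i \<in> J")
      case True
      then have "i \<le> \<Sum>J" using U(1) J_def nat_le_sum[of J i "\<lambda>i. i"] by simp
      then have "g i = f i" using h by auto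
      then show ?thesis using U(2) by (auto simp: PiE_UNIV_domain)
    next
      case False then show ?thesis by (auto simp: J_def)
    qed
    then show ?thesis using U(3) by (auto simp: PiE_UNIV_domain)
  qed
  then show ?thesis by blast
qed

lemma mid_open:
  assumes "openin (prod_topology (discrete_topology UNIV)
        (prod_topology (product_topology (\<lambda>_. discrete_topology UNIV) (UNIV::nat set))
                       (product_topology (\<lambda>_. discrete_topology UNIV) UNIV))) V" "v \<in> V"
  shows "\<exists>d. \<forall>w. fst w = fst v \<and> (\<forall>n<d. fst (snd w) n = fst (snd v) n \<and> snd (snd w) n = snd (snd v) n) \<longrightarrow> w \<in> V"
proof -
  obtain U1 W where U: "openin (discrete_topology UNIV) U1"
    "openin (prod_topology (product_topology (\<lambda>_. discrete_topology UNIV) (UNIV::nat set))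
                       (product_topology (\<lambda>_. discrete_topology UNIV) UNIV)) W"
    "fst v \<in> U1" "snd v \<in> W" "U1 \<times> W \<subseteq> V"
    using assms unfolding openin_prod_topology_alt by (metis prod.collapse)
  obtain U2 U3 where U2: "openin (product_topology (\<lambda>_. discrete_topology UNIV) (UNIV::nat set)) U2"
    "openin (product_topology (\<lambda>_. discrete_topology UNIV) (UNIV::nat set)) U3"
    "fst (snd v) \<in> U2" "snd (snd v) \<in> U3" "U2 \<times> U3 \<subseteq> W"
    using U(2,4) unfolding openin_prod_topology_alt by (metis prod.collapse)
  obtain d2 where d2: "\<forall>g. (\<forall>n<d2. g n = fst (snd v) n) \<longrightarrow> g \<in> U2" using fun_open[OF U2(1,3)] by blast
  obtain d3 where d3: "\<forall>g. (\<forall>n<d3. g n = snd (snd v) n) \<longrightarrow> g \<in> U3" using fun_open[OF U2(2,4)] by blast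
  have "w \<in> V" if "fst w = fst v" "\<forall>n<d2+d3. fst (snd w) n = fst (snd v) n \<and> snd (snd w) n = snd (snd v) n" for w
  proof -
    have "fst (snd w) \<in> U2" "snd (snd w) \<in> U3" using d2 d3 that(2) by auto
    then have "snd w \<in> W" using U2(5) by (metis mem_Sigma_iff prod.collapse subsetD)
    then show ?thesis using U(3,5) that(1) by (metis mem_Sigma_iff prod.collapse subsetD)
  qed
  then show ?thesis by blast
qed

lemma open_agr:
  assumes "openin Tbig S" "x \<in> S"
  shows "\<exists>d. \<forall>z. agr d x z \<longrightarrow> z \<in> S"
proof -
  obtain U where U: "finite {i. U i \<noteq> topspace (prod_topology (discrete_topology UNIV)
        (prod_topology (product_topology (\<lambda>_. discrete_topology UNIV) (UNIV::nat set))
                       (product_topology (\<lambda>_. discrete_topology UNIV) UNIV)))}"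
     "\<forall>i. openin (prod_topology (discrete_topology UNIV)
        (prod_topology (product_topology (\<lambda>_. discrete_topology UNIV) (UNIV::nat set))
                       (product_topology (\<lambda>_. discrete_topology UNIV) UNIV))) (U i)"
     "x \<in> PiE UNIV U" "PiE UNIV U \<subseteq> S"
    using assms unfolding Tbig_def openin_product_topology_alt by auto
  define J where "J = {i. U i \<noteq> UNIV}"
  have fJ: "finite J" using U(1) by (simp add: J_def)
  have "\<forall>i. \<exists>d. \<forall>w. fst w = fst (x i) \<and> (\<forall>n<d. fst (snd w) n = fst (snd (x i)) n \<and> snd (snd w) n = snd (snd (x i)) n) \<longrightarrow> w \<in> U i"
  proof
    fix i
    have "x i \<in> U i" using U(3) by (auto simp: PiE_UNIV_domain)
    from mid_open[OF U(2)[rule_format] this] show "\<exists>d. \<forall>w. fst w = fst (x i) \<and> (\<forall>n<d. fst (snd w) n = fst (snd (x i)) n \<and> snd (snd w) n = snd (snd (x i)) n) \<longrightarrow> w \<in> U i" .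
  qed
  then obtain dd where dd: "\<And>i w. fst w = fst (x i) \<Longrightarrow> (\<forall>n<dd i. fst (snd w) n = fst (snd (x i)) n \<and> snd (snd w) n = snd (snd (x i)) n) \<Longrightarrow> w \<in> U i"
    by metis
  define D where "D = (\<Sum>i\<in>J. Suc i + dd i)"
  have "z \<in> S" if "agr D x z" for z
  proof -
    have "z i \<in> U i" for i
    proof (cases "i \<in> J")
      case True
      then have le: "Suc i + dd i \<le> D" unfolding D_def using fJ
        using nat_le_sum[of J i "\<lambda>i. Suc i + dd i"] by simp
      show ?thesis
        by (rule dd) (use that le in \<open>auto simp: agr_def\<close>)
    next
      case False then show ?thesis by (auto simp: J_def)
    qed
    then show ?thesis using U(4) by (auto simp: PiE_UNIV_domain)
  qed
  then show ?thesis by blast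
qed

lemma agr_open: "openin Tbig {z. agr d x z}"
proof -
  define B1 where "B1 = (\<lambda>i. PiE UNIV (\<lambda>n. if n < d then {fst (snd (x i)) n} else UNIV))"
  define B2 where "B2 = (\<lambda>i. PiE UNIV (\<lambda>n. if n < d then {snd (snd (x i)) n} else UNIV))"
  define G where "G = (\<lambda>i. if i < d then {fst (x i)} \<times> (B1 i \<times> B2 i) else UNIV)"
  have o1: "openin (product_topology (\<lambda>_. discrete_topology UNIV) (UNIV::nat set)) (B1 i)" for i
    unfolding B1_def openin_PiE_gen by (rule disjI2) (auto intro: finite_subset[of _ "{..<d}"])
  have o2: "openin (product_topology (\<lambda>_. discrete_topology UNIV) (UNIV::nat set)) (B2 i)" for i
    unfolding B2_def openin_PiE_gen by (rule disjI2) (auto intro: finite_subset[of _ "{..<d}"])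
  have oG: "openin (prod_topology (discrete_topology UNIV)
        (prod_topology (product_topology (\<lambda>_. discrete_topology UNIV) (UNIV::nat set))
                       (product_topology (\<lambda>_. discrete_topology UNIV) UNIV))) (G i)" for i
    using o1 o2 unfolding G_def
    by (auto simp: openin_prod_Times_iff PiE_UNIV_domain) (metis openin_topspace topspace_mid)
  have "openin Tbig (PiE UNIV G)"
    unfolding Tbig_def openin_PiE_gen
    by (rule disjI2) (use oG in \<open>auto simp: G_def PiE_UNIV_domain intro: finite_subset[of _ "{..<d}"]\<close>)
  moreover have "PiE UNIV G = {z. agr d x z}"
  proof -
    have b1: "w \<in> B1 i \<longleftrightarrow> (\<forall>n<d. w n = fst (snd (x i)) n)" for w i
      by (auto simp: B1_def PiE_UNIV_domain Pi_iff)
    have b2: "w \<in> B2 i \<longleftrightarrow> (\<forall>n<d. w n = snd (snd (x i)) n)" for w i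
      by (auto simp: B2_def PiE_UNIV_domain Pi_iff)
    have "z \<in> PiE UNIV G \<longleftrightarrow> (\<forall>i. z i \<in> G i)" for z
      by (simp add: PiE_UNIV_domain Pi_iff)
    moreover have "z i \<in> G i \<longleftrightarrow> (i < d \<longrightarrow> fst (z i) = fst (x i) \<and>
      (\<forall>n<d. fst (snd (z i)) n = fst (snd (x i)) n) \<and> (\<forall>n<d. snd (snd (z i)) n = snd (snd (x i)) n))" for z i
      by (simp add: G_def mem_Times_iff b1 b2)
    ultimately show ?thesis unfolding agr_def by blast
  qed
  ultimately show ?thesis by simp
qed

definition Acell :: "(nat \<Rightarrow> nat) \<Rightarrow> (nat \<Rightarrow> nat \<Rightarrow> 'a \<Rightarrow> nat \<Rightarrow> bool) \<Rightarrow> (nat \<Rightarrow> nat \<Rightarrow> 'b \<Rightarrow> nat \<Rightarrow> bool) \<Rightarrow> nat \<Rightarrow> (('a, 'b) pt \<Rightarrow> complex) set" where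
  "Acell m Em Ep l = {f. (\<forall>x. x \<notin> Xplus m Em Ep \<longrightarrow> f x = 0) \<and>
     (\<forall>x\<in>Xplus m Em Ep. \<forall>z\<in>Xplus m Em Ep. cellrel l (omega0 m Em Ep x) (omega0 m Em Ep z) \<longrightarrow> f x = f z)}"

lemma loc_const_CX:
  assumes z: "\<forall>x. x \<notin> Xplus m Em Ep \<longrightarrow> f x = 0"
    and lc: "\<forall>x\<in>Xplus m Em Ep. \<exists>d. \<forall>z\<in>Xplus m Em Ep. agr d x z \<longrightarrow> f z = f x"
  shows "f \<in> CX m Em Ep"
proof -
  have "continuous_map (Xtop m Em Ep) euclidean f"
    unfolding continuous_map_def Xtop_eq
  proof (intro conjI allI impI)
    show "f \<in> topspace (subtopology Tbig (Xplus m Em Ep)) \<rightarrow> topspace euclidean" by simp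
  next
    fix U :: "complex set"
    let ?P = "{x \<in> topspace (subtopology Tbig (Xplus m Em Ep)). f x \<in> U}"
    show "openin (subtopology Tbig (Xplus m Em Ep)) ?P"
    proof (subst openin_subopen, intro ballI)
      fix x assume x: "x \<in> ?P"
      then have xX: "x \<in> Xplus m Em Ep" by simp
      obtain d where d: "\<forall>z\<in>Xplus m Em Ep. agr d x z \<longrightarrow> f z = f x" using lc xX by blast
      have "openin (subtopology Tbig (Xplus m Em Ep)) ({z. agr d x z} \<inter> Xplus m Em Ep)"
        unfolding openin_subtopology using agr_open by blast
      moreover have "x \<in> {z. agr d x z} \<inter> Xplus m Em Ep" using xX agr_refl by blast
      moreover have "{z. agr d x z} \<inter> Xplus m Em Ep \<subseteq> ?P" using d x by auto
      ultimately show "\<exists>T. openin (subtopology Tbig (Xplus m Em Ep)) T \<and> x \<in> T \<and> T \<subseteq> ?P" by blast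
    qed
  qed
  then show ?thesis using z by (simp add: CX_def)
qed

context
  fixes m :: "nat \<Rightarrow> nat"
    and Em :: "nat \<Rightarrow> nat \<Rightarrow> 'a::finite \<Rightarrow> nat \<Rightarrow> bool"
    and Ep :: "nat \<Rightarrow> nat \<Rightarrow> 'b::finite \<Rightarrow> nat \<Rightarrow> bool"
  assumes lb: "lambda_bisystem m Em Ep"
begin

lemma agr_cell:
  assumes x: "x \<in> Xplus m Em Ep" and z: "z \<in> Xplus m Em Ep" and a: "agr (Suc (Suc l)) x z"
  shows "cellrel l (omega0 m Em Ep x) (omega0 m Em Ep z)"
proof -
  have ex: "EplusL Ep (omega0 m Em Ep x) (fst (x 0)) (snd (x 0))" using w0_prop[OF lb x] by blast
  have ez: "EplusL Ep (omega0 m Em Ep z) (fst (z 0)) (snd (z 0))" using w0_prop[OF lb z] by blast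
  have f0: "fst (z 0) = fst (x 0)" using a by (simp add: agr_def)
  have "\<forall>n<Suc (Suc l). fst (snd (z 0)) n = fst (snd (x 0)) n \<and> snd (snd (z 0)) n = snd (snd (x 0)) n"
    using a unfolding agr_def by blast
  then have "cellrel (Suc l) (snd (x 0)) (snd (z 0))"
    unfolding cellrel_def by auto
  then show ?thesis using cell_pre[OF lb ex ez[unfolded f0]] by blast
qed

lemma Acell_CX: "Acell m Em Ep l \<subseteq> CX m Em Ep"
proof
  fix f assume f: "f \<in> Acell m Em Ep l"
  show "f \<in> CX m Em Ep"
  proof (rule loc_const_CX)
    show "\<forall>x. x \<notin> Xplus m Em Ep \<longrightarrow> f x = 0" using f by (simp add: Acell_def)
    show "\<forall>x\<in>Xplus m Em Ep. \<exists>d. \<forall>z\<in>Xplus m Em Ep. agr d x z \<longrightarrow> f z = f x"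
    proof
      fix x assume x: "x \<in> Xplus m Em Ep"
      have "f z = f x" if "z \<in> Xplus m Em Ep" "agr (Suc (Suc l)) x z" for z
        using f agr_cell[OF x that(1,2)] x that(1) unfolding Acell_def by auto
      then show "\<exists>d. \<forall>z\<in>Xplus m Em Ep. agr d x z \<longrightarrow> f z = f x" by blast
    qed
  qed
qed

lemma Acell_mono: "l \<le> l' \<Longrightarrow> Acell m Em Ep l \<subseteq> Acell m Em Ep l'"
proof
  fix f assume le: "l \<le> l'" and f: "f \<in> Acell m Em Ep l"
  have "f x = f z" if "x \<in> Xplus m Em Ep" "z \<in> Xplus m Em Ep"
     "cellrel l' (omega0 m Em Ep x) (omega0 m Em Ep z)" for x z
  proof -
    have "cellrel l (omega0 m Em Ep x) (omega0 m Em Ep z)"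
      by (rule cell_down[OF lb _ _ that(3) le]) (use w0_prop[OF lb] that in auto)
    then show ?thesis using f that(1,2) unfolding Acell_def by blast
  qed
  then show "f \<in> Acell m Em Ep l'" using f unfolding Acell_def by blast
qed

lemma cstar_Acell: "cstar_sub m Em Ep (Acell m Em Ep l)"
  unfolding cstar_sub_def
proof (intro conjI ballI allI impI)
  show "Acell m Em Ep l \<subseteq> CX m Em Ep" by (rule Acell_CX)
next
  fix f assume f: "f \<in> CX m Em Ep" and ap: "\<forall>e>0. \<exists>g\<in>Acell m Em Ep l. \<forall>x\<in>Xplus m Em Ep. cmod (f x - g x) < e"
  show "f \<in> Acell m Em Ep l"
    unfolding Acell_def
  proof (intro CollectI conjI allI impI ballI)
    fix x assume "x \<notin> Xplus m Em Ep" then show "f x = 0" using f by (simp add: CX_def)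
  next
    fix x z assume x: "x \<in> Xplus m Em Ep" and z: "z \<in> Xplus m Em Ep"
      and c: "cellrel l (omega0 m Em Ep x) (omega0 m Em Ep z)"
    show "f x = f z"
    proof (rule ccontr)
      assume ne: "f x \<noteq> f z"
      define e where "e = cmod (f x - f z) / 2"
      have "e > 0" using ne by (simp add: e_def)
      then obtain g where g: "g \<in> Acell m Em Ep l" "\<forall>x\<in>Xplus m Em Ep. cmod (f x - g x) < e"
        using ap by blast
      have gxz: "g x = g z" using g(1) x z c by (simp add: Acell_def)
      have "f x - f z = (f x - g x) + (g z - f z)" using gxz by simp
      then have "cmod (f x - f z) \<le> cmod (f x - g x) + cmod (g z - f z)"
        by (metis norm_triangle_ineq)
      also have "\<dots> < e + e" using g(2) x z by (metis add_strict_mono norm_minus_commute)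
      finally show False by (simp add: e_def)
    qed
  qed
qed (auto simp: Acell_def)

lemma unitX_Acell: "unitX m Em Ep \<in> Acell m Em Ep l"
  by (simp add: Acell_def unitX_def)

lemma UX_iff: "x \<in> U_X m Em Ep l i xi \<longleftrightarrow> x \<in> Xplus m Em Ep \<and> fst (omega0 m Em Ep x) l = i \<and>
    xi = rev (map (snd (omega0 m Em Ep x)) [0..<l])"
  unfolding U_X_def U_Omega_def using w0_prop[OF lb] by blast

lemma Eproj_Acell: "Eproj m Em Ep l i xi \<in> Acell m Em Ep l"
proof -
  have "(x \<in> U_X m Em Ep l i xi) = (z \<in> U_X m Em Ep l i xi)"
    if "x \<in> Xplus m Em Ep" "z \<in> Xplus m Em Ep" "cellrel l (omega0 m Em Ep x) (omega0 m Em Ep z)" for x z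
  proof -
    have "map (snd (omega0 m Em Ep x)) [0..<l] = map (snd (omega0 m Em Ep z)) [0..<l]"
      using that(3) by (simp add: cellrel_def)
    moreover have "fst (omega0 m Em Ep x) l = fst (omega0 m Em Ep z) l" using that(3) by (simp add: cellrel_def)
    ultimately show ?thesis using that(1,2) unfolding UX_iff by metis
  qed
  then show ?thesis unfolding Acell_def Eproj_def by (auto simp: UX_iff)
qed

lemma rho_set:
  assumes y: "y \<in> Xplus m Em Ep"
  shows "{x \<in> Xplus m Em Ep. shift x = y \<and> fst (x 0) = a} =
     (if adm Ep a (omega0 m Em Ep y) then {pre m Em Ep a y} else {})"
proof -
  have A: "x = pre m Em Ep a y \<and> adm Ep a (omega0 m Em Ep y)"
    if "x \<in> Xplus m Em Ep" "shift x = y" "fst (x 0) = a" for x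
  proof -
    have "x = pre m Em Ep (fst (x 0)) (shift x)" by (rule X_pre_eq[OF lb that(1)])
    moreover have "adm Ep (fst (x 0)) (omega0 m Em Ep (shift x))" by (rule adm_X[OF lb that(1)])
    ultimately show ?thesis unfolding that(2,3) by blast
  qed
  have B: "pre m Em Ep a y \<in> {x \<in> Xplus m Em Ep. shift x = y \<and> fst (x 0) = a}" if "adm Ep a (omega0 m Em Ep y)"
    using pre_X(1)[OF lb y that] shift_pre[OF lb] pre_0[OF lb] by blast
  show ?thesis
  proof (cases "adm Ep a (omega0 m Em Ep y)")
    case True
    then show ?thesis using A B[OF True] by (simp only: if_True) blast
  next
    case False
    then show ?thesis using A by (simp only: if_False) blast
  qed
qed

lemma rho_eq:
  "rho m Em Ep a f y = (if y \<in> Xplus m Em Ep \<and> adm Ep a (omega0 m Em Ep y) then f (pre m Em Ep a y) else 0)"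
  unfolding rho_def using rho_set by auto

lemma rho_Acell:
  assumes f: "f \<in> Acell m Em Ep l"
  shows "rho m Em Ep a f \<in> Acell m Em Ep (Suc l)"
  unfolding Acell_def
proof (intro CollectI conjI allI impI ballI)
  fix x assume "x \<notin> Xplus m Em Ep" then show "rho m Em Ep a f x = 0" by (simp add: rho_eq)
next
  fix y y' assume y: "y \<in> Xplus m Em Ep" and y': "y' \<in> Xplus m Em Ep"
    and c: "cellrel (Suc l) (omega0 m Em Ep y) (omega0 m Em Ep y')"
  have o: "omega0 m Em Ep y \<in> Omega m Em" "omega0 m Em Ep y' \<in> Omega m Em" using w0_prop[OF lb] y y' by auto
  have c': "cellrel (Suc l) (omega0 m Em Ep y') (omega0 m Em Ep y)" using c by (auto simp: cellrel_def)
  have ad: "adm Ep a (omega0 m Em Ep y) = adm Ep a (omega0 m Em Ep y')"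
    using adm_cell[OF lb o c] adm_cell[OF lb o(2,1) c'] by auto
  show "rho m Em Ep a f y = rho m Em Ep a f y'"
  proof (cases "adm Ep a (omega0 m Em Ep y)")
    case True
    then have T': "adm Ep a (omega0 m Em Ep y')" using ad by simp
    have "cellrel l (omega0 m Em Ep (pre m Em Ep a y)) (omega0 m Em Ep (pre m Em Ep a y'))"
      using cell_pre[OF lb pre_X(2)[OF lb y True] pre_X(2)[OF lb y' T'] c] .
    then have "f (pre m Em Ep a y) = f (pre m Em Ep a y')"
      using f pre_X(1)[OF lb y True] pre_X(1)[OF lb y' T'] by (simp add: Acell_def)
    then show ?thesis using True T' y y' by (simp add: rho_eq)
  next
    case False
    then show ?thesis using ad y y' by (simp add: rho_eq)
  qed
qed

end

lemma CX_add: "f \<in> CX m Em Ep \<Longrightarrow> g \<in> CX m Em Ep \<Longrightarrow> (\<lambda>x. f x + g x) \<in> CX m Em Ep"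
  unfolding CX_def by (auto simp: continuous_map_atin tendsto_add)
lemma CX_mult: "f \<in> CX m Em Ep \<Longrightarrow> g \<in> CX m Em Ep \<Longrightarrow> (\<lambda>x. f x * g x) \<in> CX m Em Ep"
  unfolding CX_def by (auto simp: continuous_map_atin tendsto_mult)
lemma CX_scale: "f \<in> CX m Em Ep \<Longrightarrow> (\<lambda>x. c * f x) \<in> CX m Em Ep"
  unfolding CX_def by (auto simp: continuous_map_atin tendsto_mult)
lemma CX_cnj: "f \<in> CX m Em Ep \<Longrightarrow> (\<lambda>x. cnj (f x)) \<in> CX m Em Ep"
  unfolding CX_def by (auto simp: continuous_map_atin tendsto_cnj)

lemma prod_approx:
  fixes a b c d :: complex
  assumes "cmod a \<le> K1" "cmod b \<le> K2" "cmod (a - c) < e" "cmod (b - d) < e" "e \<le> 1"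
  shows "cmod (a * b - c * d) \<le> e * (K1 + K2 + 1)"
proof -
  have "a * b - c * d = a * (b - d) + (a - c) * d" by (simp add: algebra_simps)
  then have "cmod (a * b - c * d) \<le> cmod a * cmod (b - d) + cmod (a - c) * cmod d"
    by (metis norm_mult norm_triangle_ineq)
  moreover have "cmod d \<le> K2 + 1"
    using assms(2,4,5) norm_triangle_ineq4[of b d] by (smt (verit) norm_minus_commute norm_triangle_ineq2)
  moreover have "cmod a * cmod (b - d) \<le> K1 * e"
    using assms by (meson less_imp_le mult_mono norm_ge_zero order_trans)
  moreover have "cmod (a - c) * cmod d \<le> e * (K2 + 1)"
    using assms \<open>cmod d \<le> K2 + 1\<close> by (meson less_imp_le mult_mono norm_ge_zero order_trans)
  ultimately show ?thesis by (simp add: algebra_simps)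
qed

lemma agr_all_eq: "(\<forall>d. agr d y y') \<Longrightarrow> y = y'"
proof -
  assume h: "\<forall>d. agr d y y'"
  have "y i = y' i" for i
  proof -
    have "fst (y' i) = fst (y i)" using h by (auto simp: agr_def)
    moreover have "fst (snd (y' i)) n = fst (snd (y i)) n \<and> snd (snd (y' i)) n = snd (snd (y i)) n" for n
      using h[rule_format, of "Suc (i + n)"] by (simp add: agr_def)
    ultimately show ?thesis by (simp add: prod_eq_iff fun_eq_iff)
  qed
  then show ?thesis by auto
qed

lemma rev_map_eq: "rev (map f [0..<l]) = rev (map g [0..<l]) \<Longrightarrow> n < l \<Longrightarrow> f n = g n"
  by (simp add: map_eq_conv)

context
  fixes m :: "nat \<Rightarrow> nat"
    and Em :: "nat \<Rightarrow> nat \<Rightarrow> 'a::finite \<Rightarrow> nat \<Rightarrow> bool"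
    and Ep :: "nat \<Rightarrow> nat \<Rightarrow> 'b::finite \<Rightarrow> nat \<Rightarrow> bool"
  assumes lb: "lambda_bisystem m Em Ep"
begin

lemma finite_C: "finite {(i, xi). i < m l \<and> xi \<in> Fw m Em l i}"
proof -
  have "{(i, xi). i < m l \<and> xi \<in> Fw m Em l i} \<subseteq> {..<m l} \<times> {xs. set xs \<subseteq> (UNIV::'a set) \<and> length xs = l}"
    by (auto simp: Fw_def)
  moreover have "finite ({..<m l} \<times> {xs. set xs \<subseteq> (UNIV::'a set) \<and> length xs = l})"
    using finite_lists_length_eq[of "UNIV::'a set" l] by simp
  ultimately show ?thesis using finite_subset by blast
qed

lemma key_in_C:
  assumes x: "x \<in> Xplus m Em Ep"
  shows "fst (omega0 m Em Ep x) l < m l \<and>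
    rev (map (snd (omega0 m Em Ep x)) [0..<l]) \<in> Fw m Em l (fst (omega0 m Em Ep x) l)"
proof -
  let ?w = "omega0 m Em Ep x"
  have om: "\<forall>k. fst ?w k < m k \<and> Em k (fst ?w (Suc k)) (snd ?w k) (fst ?w k)"
    using w0_prop[OF lb x] by (simp add: Omega_def split_beta)
  have "rev (map (snd ?w) [0..<l]) ! (l - Suc k) = snd ?w k" if "k < l" for k
    using that by (simp add: rev_nth)
  then have "\<forall>k<l. fst ?w k < m k \<and> Em k (fst ?w (Suc k)) (rev (map (snd ?w) [0..<l]) ! (l - Suc k)) (fst ?w k)"
    using om by simp
  then show ?thesis using om unfolding Fw_def by auto
qed

lemma Acell_AL: "Acell m Em Ep l \<subseteq> A_L m Em Ep"
proof
  fix f assume f: "f \<in> Acell m Em Ep l"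
  show "f \<in> A_L m Em Ep"
    unfolding A_L_def
  proof (rule InterI, clarify)
    fix B assume cs: "cstar_sub m Em Ep B"
      and gen: "{Eproj m Em Ep l i xi | l i xi. i < m l \<and> xi \<in> Fw m Em l i} \<subseteq> B"
    define C where "C = {(i, xi). i < m l \<and> xi \<in> Fw m Em l i}"
    have fC: "finite C" unfolding C_def by (rule finite_C)
    define c where "c = (\<lambda>p. f (SOME x. x \<in> U_X m Em Ep l (fst p) (snd p)))"
    have sumB: "\<And>D. finite D \<Longrightarrow> D \<subseteq> C \<Longrightarrow> (\<lambda>x. \<Sum>p\<in>D. c p * Eproj m Em Ep l (fst p) (snd p) x) \<in> B"
    proof -
      fix D :: "(nat \<times> 'a list) set"
      assume "finite D" "D \<subseteq> C"
      then show "(\<lambda>x. \<Sum>p\<in>D. c p * Eproj m Em Ep l (fst p) (snd p) x) \<in> B"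
      proof (induction D rule: finite_induct)
        case empty then show ?case using cs by (simp add: cstar_sub_def)
      next
        case (insert p D)
        have "Eproj m Em Ep l (fst p) (snd p) \<in> B" using gen insert.prems
          by (auto simp: C_def split_beta)
        then have "(\<lambda>x. c p * Eproj m Em Ep l (fst p) (snd p) x) \<in> B" using cs by (simp add: cstar_sub_def)
        then show ?case using insert cs unfolding cstar_sub_def by simp
      qed
    qed
    have "f = (\<lambda>x. \<Sum>p\<in>C. c p * Eproj m Em Ep l (fst p) (snd p) x)"
    proof
      fix x
      show "f x = (\<Sum>p\<in>C. c p * Eproj m Em Ep l (fst p) (snd p) x)"
      proof (cases "x \<in> Xplus m Em Ep")
        case False
        then have "Eproj m Em Ep l i xi x = 0" for i xi by (simp add: Eproj_def UX_iff[OF lb])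
        then show ?thesis using False f by (simp add: Acell_def)
      next
        case True
        define p0 where "p0 = (fst (omega0 m Em Ep x) l, rev (map (snd (omega0 m Em Ep x)) [0..<l]))"
        have p0C: "p0 \<in> C" using key_in_C[OF True] by (simp add: p0_def C_def)
        have E: "Eproj m Em Ep l (fst p) (snd p) x = (if p = p0 then 1 else 0)" for p
          using True by (cases p) (auto simp: Eproj_def UX_iff[OF lb] p0_def)
        have "(\<Sum>p\<in>C. c p * Eproj m Em Ep l (fst p) (snd p) x) = c p0"
          unfolding E using fC p0C by (simp add: sum.delta' if_distrib[of "\<lambda>t. c _ * t"] cong: if_cong)
        moreover have "c p0 = f x"
        proof -
          have ex: "\<exists>x'. x' \<in> U_X m Em Ep l (fst p0) (snd p0)" using True by (auto simp: UX_iff[OF lb] p0_def)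
          define x' where "x' = (SOME x. x \<in> U_X m Em Ep l (fst p0) (snd p0))"
          have x': "x' \<in> U_X m Em Ep l (fst p0) (snd p0)" unfolding x'_def using someI_ex[OF ex] .
          then have "cellrel l (omega0 m Em Ep x') (omega0 m Em Ep x)"
            unfolding cellrel_def using rev_map_eq by (auto simp: UX_iff[OF lb] p0_def) 
          then have "f x' = f x" using f x' True by (auto simp: Acell_def UX_iff[OF lb])
          then show ?thesis by (simp add: c_def x'_def)
        qed
        ultimately show ?thesis by simp
      qed
    qed
    then show "f \<in> B" using sumB[OF fC] by simp
  qed
qed

end

lemma small_lemma:
  fixes e S d :: real
  assumes "0 < e" "0 \<le> S" "d \<le> e / (S + 1)"
  shows "d * S < e"
proof -
  have "d * S \<le> e / (S + 1) * S" using mult_right_mono[OF assms(3) assms(2)] .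
  also have "\<dots> < e" using assms by (simp add: field_simps)
  finally show ?thesis .
qed

context
  fixes m :: "nat \<Rightarrow> nat"
    and Em :: "nat \<Rightarrow> nat \<Rightarrow> 'a::finite \<Rightarrow> nat \<Rightarrow> bool"
    and Ep :: "nat \<Rightarrow> nat \<Rightarrow> 'b::finite \<Rightarrow> nat \<Rightarrow> bool"
  assumes lb: "lambda_bisystem m Em Ep"
begin

definition Bd :: "(('a, 'b) pt \<Rightarrow> complex) set" where
  "Bd = {f \<in> CX m Em Ep. (\<exists>K. \<forall>x\<in>Xplus m Em Ep. cmod (f x) \<le> K) \<and>
      (\<forall>e>0. \<exists>l\<ge>1. \<exists>g\<in>Acell m Em Ep l. \<forall>x\<in>Xplus m Em Ep. cmod (f x - g x) < e)}"

lemma Acell_max: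
  assumes "g1 \<in> Acell m Em Ep l1" "g2 \<in> Acell m Em Ep l2"
  shows "g1 \<in> Acell m Em Ep (max l1 l2)" "g2 \<in> Acell m Em Ep (max l1 l2)"
  using Acell_mono[OF lb, of l1 "max l1 l2"] Acell_mono[OF lb, of l2 "max l1 l2"] assms by auto

lemma Acell_closed:
  shows "g1 \<in> Acell m Em Ep l \<Longrightarrow> g2 \<in> Acell m Em Ep l \<Longrightarrow> (\<lambda>x. g1 x + g2 x) \<in> Acell m Em Ep l"
    and "g1 \<in> Acell m Em Ep l \<Longrightarrow> g2 \<in> Acell m Em Ep l \<Longrightarrow> (\<lambda>x. g1 x * g2 x) \<in> Acell m Em Ep l"
    and "g1 \<in> Acell m Em Ep l \<Longrightarrow> (\<lambda>x. c * g1 x) \<in> Acell m Em Ep l"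
    and "g1 \<in> Acell m Em Ep l \<Longrightarrow> (\<lambda>x. cnj (g1 x)) \<in> Acell m Em Ep l"
  unfolding Acell_def by auto

lemma Bd_bound: "f \<in> Bd \<Longrightarrow> \<exists>K\<ge>0. \<forall>x\<in>Xplus m Em Ep. cmod (f x) \<le> K"
proof -
  assume "f \<in> Bd"
  then obtain K where K: "\<forall>x\<in>Xplus m Em Ep. cmod (f x) \<le> K" unfolding Bd_def by blast
  have "\<forall>x\<in>Xplus m Em Ep. cmod (f x) \<le> max 0 K" using K by (meson max.coboundedI2)
  then show ?thesis by (meson max.cobounded1)
qed

lemma cstar_Bd: "cstar_sub m Em Ep Bd"
  unfolding cstar_sub_def
proof (intro conjI ballI allI impI)
  show "Bd \<subseteq> CX m Em Ep" by (auto simp: Bd_def)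
next
  show "(\<lambda>_. 0) \<in> Bd"
    unfolding Bd_def
  proof (intro CollectI conjI allI impI)
    show "(\<lambda>_. 0) \<in> CX m Em Ep" using Acell_CX[OF lb] cstar_Acell[OF lb] unfolding cstar_sub_def by blast
    show "\<exists>K. \<forall>x\<in>Xplus m Em Ep. cmod 0 \<le> K" by auto
    fix e :: real assume "e > 0"
    moreover have "(\<lambda>_. 0) \<in> Acell m Em Ep 1" by (simp add: Acell_def)
    ultimately show "\<exists>l\<ge>1. \<exists>g\<in>Acell m Em Ep l. \<forall>x\<in>Xplus m Em Ep. cmod (0 - g x) < e"
      by (intro exI[of _ 1] conjI bexI[of _ "\<lambda>_. 0"] ballI) auto
  qed
next
  fix f g assume f: "f \<in> Bd" and g: "g \<in> Bd"
  obtain K1 where K1: "K1 \<ge> 0" "\<forall>x\<in>Xplus m Em Ep. cmod (f x) \<le> K1" using Bd_bound[OF f] by blast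
  obtain K2 where K2: "K2 \<ge> 0" "\<forall>x\<in>Xplus m Em Ep. cmod (g x) \<le> K2" using Bd_bound[OF g] by blast
  have fa: "\<forall>e>0. \<exists>l\<ge>1. \<exists>h\<in>Acell m Em Ep l. \<forall>x\<in>Xplus m Em Ep. cmod (f x - h x) < e"
    and ga: "\<forall>e>0. \<exists>l\<ge>1. \<exists>h\<in>Acell m Em Ep l. \<forall>x\<in>Xplus m Em Ep. cmod (g x - h x) < e"
    and fc: "f \<in> CX m Em Ep" and gc: "g \<in> CX m Em Ep" using f g by (auto simp: Bd_def)
  show "(\<lambda>x. f x + g x) \<in> Bd"
    unfolding Bd_def
  proof (intro CollectI conjI allI impI)
    show "(\<lambda>x. f x + g x) \<in> CX m Em Ep" using CX_add fc gc by blast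
    show "\<exists>K. \<forall>x\<in>Xplus m Em Ep. cmod (f x + g x) \<le> K"
    proof (intro exI ballI)
      fix x assume x: "x \<in> Xplus m Em Ep"
      have "cmod (f x + g x) \<le> cmod (f x) + cmod (g x)" by (rule norm_triangle_ineq)
      moreover have "cmod (f x) \<le> K1" "cmod (g x) \<le> K2" using K1(2) K2(2) x by auto
      ultimately show "cmod (f x + g x) \<le> K1 + K2" by linarith
    qed
    fix e :: real assume e: "e > 0"
    obtain l1 h1 where h1: "l1 \<ge> 1" "h1 \<in> Acell m Em Ep l1" "\<forall>x\<in>Xplus m Em Ep. cmod (f x - h1 x) < e/2"
      using fa e by (meson half_gt_zero)
    obtain l2 h2 where h2: "l2 \<ge> 1" "h2 \<in> Acell m Em Ep l2" "\<forall>x\<in>Xplus m Em Ep. cmod (g x - h2 x) < e/2"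
      using ga e by (meson half_gt_zero)
    have "(\<lambda>x. h1 x + h2 x) \<in> Acell m Em Ep (max l1 l2)"
      using Acell_max[OF h1(2) h2(2)] Acell_closed(1) by blast
    moreover have "cmod (f x + g x - (h1 x + h2 x)) < e" if "x \<in> Xplus m Em Ep" for x
    proof -
      have "f x + g x - (h1 x + h2 x) = (f x - h1 x) + (g x - h2 x)" by simp
      then have "cmod (f x + g x - (h1 x + h2 x)) \<le> cmod (f x - h1 x) + cmod (g x - h2 x)"
        using norm_triangle_ineq[of "f x - h1 x" "g x - h2 x"] by (simp only:)
      moreover have "cmod (f x - h1 x) < e/2" "cmod (g x - h2 x) < e/2" using h1(3) h2(3) that by auto
      ultimately show ?thesis by linarith
    qed
    moreover have "1 \<le> max l1 l2" using h1(1) by simp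
    ultimately show "\<exists>l\<ge>1. \<exists>h\<in>Acell m Em Ep l. \<forall>x\<in>Xplus m Em Ep. cmod (f x + g x - h x) < e"
      by (intro exI[of _ "max l1 l2"] conjI bexI[of _ "\<lambda>x. h1 x + h2 x"] ballI) auto
  qed
  show "(\<lambda>x. f x * g x) \<in> Bd"
    unfolding Bd_def
  proof (intro CollectI conjI allI impI)
    show "(\<lambda>x. f x * g x) \<in> CX m Em Ep" using CX_mult fc gc by blast
    show "\<exists>K. \<forall>x\<in>Xplus m Em Ep. cmod (f x * g x) \<le> K"
    proof (intro exI ballI)
      fix x assume x: "x \<in> Xplus m Em Ep"
      have "cmod (f x) \<le> K1" "cmod (g x) \<le> K2" using K1(2) K2(2) x by auto
      then have "cmod (f x) * cmod (g x) \<le> K1 * K2" by (simp add: mult_mono K1(1))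
      then show "cmod (f x * g x) \<le> K1 * K2" by (simp add: norm_mult)
    qed
    fix e :: real assume e: "e > 0"
    define d where "d = min 1 (e / (K1 + K2 + 2))"
    have "K1 + K2 + 1 + 1 = K1 + K2 + 2" by simp
    then have d: "d > 0" "d \<le> 1" "d \<le> e / (K1 + K2 + 1 + 1)" using e K1(1) K2(1) unfolding d_def
      by (simp_all only:) (auto simp: min_def)
    obtain l1 h1 where h1: "l1 \<ge> 1" "h1 \<in> Acell m Em Ep l1" "\<forall>x\<in>Xplus m Em Ep. cmod (f x - h1 x) < d"
      using fa d by meson
    obtain l2 h2 where h2: "l2 \<ge> 1" "h2 \<in> Acell m Em Ep l2" "\<forall>x\<in>Xplus m Em Ep. cmod (g x - h2 x) < d"
      using ga d by meson
    have "(\<lambda>x. h1 x * h2 x) \<in> Acell m Em Ep (max l1 l2)"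
      using Acell_max[OF h1(2) h2(2)] Acell_closed(2) by blast
    moreover have "cmod (f x * g x - h1 x * h2 x) < e" if "x \<in> Xplus m Em Ep" for x
    proof -
      have "cmod (f x * g x - h1 x * h2 x) \<le> d * (K1 + K2 + 1)"
        by (rule prod_approx) (use K1 K2 h1 h2 d that in auto)
      also have "\<dots> < e" using small_lemma[OF e _ d(3)] K1 K2 by simp
      finally show ?thesis .
    qed
    moreover have "1 \<le> max l1 l2" using h1(1) by simp
    ultimately show "\<exists>l\<ge>1. \<exists>h\<in>Acell m Em Ep l. \<forall>x\<in>Xplus m Em Ep. cmod (f x * g x - h x) < e"
      by (intro exI[of _ "max l1 l2"] conjI bexI[of _ "\<lambda>x. h1 x * h2 x"] ballI) auto
  qed
next
  fix c :: complex and f assume f: "f \<in> Bd"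
  obtain K1 where K1: "K1 \<ge> 0" "\<forall>x\<in>Xplus m Em Ep. cmod (f x) \<le> K1" using Bd_bound[OF f] by blast
  have fa: "\<forall>e>0. \<exists>l\<ge>1. \<exists>h\<in>Acell m Em Ep l. \<forall>x\<in>Xplus m Em Ep. cmod (f x - h x) < e"
    and fc: "f \<in> CX m Em Ep" using f by (auto simp: Bd_def)
  show "(\<lambda>x. c * f x) \<in> Bd"
    unfolding Bd_def
  proof (intro CollectI conjI allI impI)
    show "(\<lambda>x. c * f x) \<in> CX m Em Ep" using CX_scale fc by blast
    show "\<exists>K. \<forall>x\<in>Xplus m Em Ep. cmod (c * f x) \<le> K"
    proof (intro exI ballI)
      fix x assume x: "x \<in> Xplus m Em Ep"
      have "cmod (f x) \<le> K1" using K1(2) x by auto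
      then have "cmod c * cmod (f x) \<le> cmod c * K1" by (simp add: mult_left_mono)
      then show "cmod (c * f x) \<le> cmod c * K1" by (simp add: norm_mult)
    qed
    fix e :: real assume e: "e > 0"
    define d where "d = e / (cmod c + 1)"
    have "cmod c + 1 > 0" by (simp add: add_nonneg_pos)
    then have d: "d > 0" using e by (simp add: d_def)
    obtain l1 h1 where h1: "l1 \<ge> 1" "h1 \<in> Acell m Em Ep l1" "\<forall>x\<in>Xplus m Em Ep. cmod (f x - h1 x) < d"
      using fa d by meson
    have "(\<lambda>x. c * h1 x) \<in> Acell m Em Ep l1" using h1(2) Acell_closed(3) by blast
    moreover have "cmod (c * f x - c * h1 x) < e" if "x \<in> Xplus m Em Ep" for x
    proof -
      have "cmod (c * f x - c * h1 x) = cmod c * cmod (f x - h1 x)"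
        by (metis norm_mult right_diff_distrib)
      also have "\<dots> \<le> cmod c * d" using h1(3) that by (simp add: less_imp_le mult_left_mono)
      also have "\<dots> < e" using small_lemma[OF e, of "cmod c" d] by (simp add: d_def mult.commute)
      finally show ?thesis .
    qed
    ultimately show "\<exists>l\<ge>1. \<exists>h\<in>Acell m Em Ep l. \<forall>x\<in>Xplus m Em Ep. cmod (c * f x - h x) < e"
      using h1(1) by (intro exI[of _ l1] conjI bexI[of _ "\<lambda>x. c * h1 x"] ballI) auto
  qed
next
  fix f assume f: "f \<in> Bd"
  show "(\<lambda>x. cnj (f x)) \<in> Bd"
    unfolding Bd_def
  proof (intro CollectI conjI allI impI)
    show "(\<lambda>x. cnj (f x)) \<in> CX m Em Ep" using CX_cnj f by (auto simp: Bd_def)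
    show "\<exists>K. \<forall>x\<in>Xplus m Em Ep. cmod (cnj (f x)) \<le> K" using f by (auto simp: Bd_def)
    fix e :: real assume e: "e > 0"
    obtain l1 h1 where h1: "l1 \<ge> 1" "h1 \<in> Acell m Em Ep l1" "\<forall>x\<in>Xplus m Em Ep. cmod (f x - h1 x) < e"
      using f e unfolding Bd_def by blast
    have "(\<lambda>x. cnj (h1 x)) \<in> Acell m Em Ep l1" using h1(2) Acell_closed(4) by blast
    moreover have "cmod (cnj (f x) - cnj (h1 x)) < e" if "x \<in> Xplus m Em Ep" for x
      using h1(3) that by (metis complex_cnj_diff complex_mod_cnj)
    ultimately show "\<exists>l\<ge>1. \<exists>h\<in>Acell m Em Ep l. \<forall>x\<in>Xplus m Em Ep. cmod (cnj (f x) - h x) < e"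
      using h1(1) by (intro exI[of _ l1] conjI bexI[of _ "\<lambda>x. cnj (h1 x)"] ballI) auto
  qed
next
  fix f assume fc: "f \<in> CX m Em Ep" and ap: "\<forall>e>0. \<exists>g\<in>Bd. \<forall>x\<in>Xplus m Em Ep. cmod (f x - g x) < e"
  show "f \<in> Bd"
    unfolding Bd_def
  proof (intro CollectI conjI allI impI)
    show "f \<in> CX m Em Ep" by (rule fc)
    have "\<exists>g\<in>Bd. \<forall>x\<in>Xplus m Em Ep. cmod (f x - g x) < 1" using ap by simp
    then obtain g where g: "g \<in> Bd" "\<forall>x\<in>Xplus m Em Ep. cmod (f x - g x) < 1" by blast
    obtain K where K: "\<forall>x\<in>Xplus m Em Ep. cmod (g x) \<le> K" using Bd_bound[OF g(1)] by blast
    have "cmod (f x) \<le> K + 1" if "x \<in> Xplus m Em Ep" for x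
    proof -
      have "cmod (f x) \<le> cmod (f x - g x) + cmod (g x)" using norm_triangle_ineq[of "f x - g x" "g x"] by simp
      moreover have "cmod (f x - g x) < 1" "cmod (g x) \<le> K" using g(2) K that by auto
      ultimately show ?thesis by linarith
    qed
    then show "\<exists>K. \<forall>x\<in>Xplus m Em Ep. cmod (f x) \<le> K" by blast
    fix e :: real assume e: "e > 0"
    have e2: "e/2 > 0" using e by simp
    have "\<exists>g\<in>Bd. \<forall>x\<in>Xplus m Em Ep. cmod (f x - g x) < e/2" using ap[rule_format, OF e2] .
    then obtain g where g: "g \<in> Bd" "\<forall>x\<in>Xplus m Em Ep. cmod (f x - g x) < e/2" by blast
    have "\<forall>e>0. \<exists>l\<ge>1. \<exists>h\<in>Acell m Em Ep l. \<forall>x\<in>Xplus m Em Ep. cmod (g x - h x) < e"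
      using g(1) unfolding Bd_def by blast
    from this[rule_format, OF e2]
    obtain l h where h: "l \<ge> 1" "h \<in> Acell m Em Ep l" "\<forall>x\<in>Xplus m Em Ep. cmod (g x - h x) < e/2"
      by blast
    have "cmod (f x - h x) < e" if "x \<in> Xplus m Em Ep" for x
    proof -
      have "cmod (f x - h x) \<le> cmod (f x - g x) + cmod (g x - h x)" using norm_triangle_ineq[of "f x - g x" "g x - h x"] by simp
      moreover have "cmod (f x - g x) < e/2" "cmod (g x - h x) < e/2" using g(2) h(3) that by auto
      ultimately show ?thesis by linarith
    qed
    then show "\<exists>l\<ge>1. \<exists>h\<in>Acell m Em Ep l. \<forall>x\<in>Xplus m Em Ep. cmod (f x - h x) < e" using h by blast
  qed
qed

lemma gens_Bd: "{Eproj m Em Ep l i xi | l i xi. i < m l \<and> xi \<in> Fw m Em l i} \<subseteq> Bd"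
proof clarify
  fix l i xi
  have E: "Eproj m Em Ep l i xi \<in> Acell m Em Ep (Suc l)"
    using Eproj_Acell[OF lb] Acell_mono[OF lb, of l "Suc l"] by auto
  show "Eproj m Em Ep l i xi \<in> Bd"
    unfolding Bd_def
  proof (intro CollectI conjI allI impI)
    show "Eproj m Em Ep l i xi \<in> CX m Em Ep" using E Acell_CX[OF lb] by blast
    show "\<exists>K. \<forall>x\<in>Xplus m Em Ep. cmod (Eproj m Em Ep l i xi x) \<le> K"
      by (rule exI[of _ 1]) (simp add: Eproj_def)
    fix e :: real assume "e > 0"
    then show "\<exists>l'\<ge>1. \<exists>g\<in>Acell m Em Ep l'. \<forall>x\<in>Xplus m Em Ep. cmod (Eproj m Em Ep l i xi x - g x) < e"
      using E \<open>e > 0\<close> by (intro exI[of _ "Suc l"] conjI bexI[of _ "Eproj m Em Ep l i xi"] ballI) auto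
  qed
qed

lemma AL_dense: "f \<in> A_L m Em Ep \<Longrightarrow> e > 0 \<Longrightarrow>
   \<exists>l\<ge>1. \<exists>g\<in>Acell m Em Ep l. \<forall>x\<in>Xplus m Em Ep. cmod (f x - g x) < e"
proof -
  assume f: "f \<in> A_L m Em Ep" and e: "e > 0"
  have "A_L m Em Ep \<subseteq> Bd" unfolding A_L_def using cstar_Bd gens_Bd by blast
  then show ?thesis using f e by (auto simp: Bd_def)
qed

end

context
  fixes m :: "nat \<Rightarrow> nat"
    and Em :: "nat \<Rightarrow> nat \<Rightarrow> 'a::finite \<Rightarrow> nat \<Rightarrow> bool"
    and Ep :: "nat \<Rightarrow> nat \<Rightarrow> 'b::finite \<Rightarrow> nat \<Rightarrow> bool"
  assumes lb: "lambda_bisystem m Em Ep"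
begin

lemma cell_of_UX:
  assumes y: "y \<in> U_X m Em Ep l i xi" and x: "x \<in> Xplus m Em Ep"
    and i: "i = fst (omega0 m Em Ep x) l" and xi: "xi = rev (map (snd (omega0 m Em Ep x)) [0..<l])"
  shows "cellrel l (omega0 m Em Ep y) (omega0 m Em Ep x)"
proof -
  have y': "y \<in> Xplus m Em Ep" "fst (omega0 m Em Ep y) l = i" "xi = rev (map (snd (omega0 m Em Ep y)) [0..<l])"
    using y UX_iff[OF lb] by auto
  have "\<forall>n<l. snd (omega0 m Em Ep y) n = snd (omega0 m Em Ep x) n"
    using rev_map_eq[of "snd (omega0 m Em Ep y)" l "snd (omega0 m Em Ep x)"] y'(3) xi by auto
  then show ?thesis using y'(2) i by (simp add: cellrel_def)
qed

lemma q_exists: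
  assumes sc: "sigma_condI m Em Ep" and kl: "1 \<le> k" "k \<le> l"
  shows "\<exists>q. projD m Em Ep q \<and>
               (\<forall>f\<in>Acell m Em Ep l. \<forall>x. q x * f x = f x * q x) \<and>
               (\<forall>f\<in>Acell m Em Ep l. f \<noteq> (\<lambda>_. 0) \<longrightarrow> (\<lambda>x. q x * f x) \<noteq> (\<lambda>_. 0)) \<and>
               (\<forall>n\<in>{1..k}. \<forall>x. q x * phi m Em Ep n q x = 0)"
proof -
  obtain pts where P1: "\<forall>i<m l. \<forall>xi\<in>Fw m Em l i. pts i xi \<in> U_X m Em Ep l i xi"
    and P2: "\<forall>i<m l. \<forall>j<m l. \<forall>xi\<in>Fw m Em l i. \<forall>eta\<in>Fw m Em l j. \<forall>n\<in>{1..k}.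
                   (shift ^^ n) (pts i xi) \<noteq> pts j eta"
    using sc kl unfolding sigma_condI_def by blast
  define C where "C = {(i, xi). i < m l \<and> xi \<in> Fw m Em l i}"
  have fC: "finite C" unfolding C_def by (rule finite_C[OF lb])
  define pp where "pp = (\<lambda>c. pts (fst c) (snd c))"
  define T where "T = C \<times> C \<times> {1..k}"
  have fT: "finite T" using fC by (simp add: T_def)
  define dd where "dd = (\<lambda>t. SOME d. \<not> agr d ((shift ^^ snd (snd t)) (pp (fst t))) (pp (fst (snd t))))"
  have ddP: "\<not> agr (dd t) ((shift ^^ snd (snd t)) (pp (fst t))) (pp (fst (snd t)))" if "t \<in> T" for t
  proof -
    have "(shift ^^ snd (snd t)) (pp (fst t)) \<noteq> pp (fst (snd t))"
      using P2 that unfolding T_def C_def pp_def by (auto simp: split_beta)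
    then have "\<exists>d. \<not> agr d ((shift ^^ snd (snd t)) (pp (fst t))) (pp (fst (snd t)))"
      using agr_all_eq by blast
    then show ?thesis unfolding dd_def by (rule someI_ex)
  qed
  define D where "D = k + (\<Sum>t\<in>T. dd t)"
  define q where "q = (\<lambda>x. if x \<in> Xplus m Em Ep \<and> (\<exists>c\<in>C. agr D (pp c) x) then (1::complex) else 0)"
  have q01: "q x = 0 \<or> q x = 1" for x by (simp add: q_def)
  have qCX: "q \<in> CX m Em Ep"
  proof (rule loc_const_CX)
    show "\<forall>x. x \<notin> Xplus m Em Ep \<longrightarrow> q x = 0" by (simp add: q_def)
    show "\<forall>x\<in>Xplus m Em Ep. \<exists>d. \<forall>z\<in>Xplus m Em Ep. agr d x z \<longrightarrow> q z = q x"
    proof (intro ballI exI[of _ D] impI)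
      fix x z assume x: "x \<in> Xplus m Em Ep" and z: "z \<in> Xplus m Em Ep" and a: "agr D x z"
      have "(\<exists>c\<in>C. agr D (pp c) x) = (\<exists>c\<in>C. agr D (pp c) z)"
        using a agr_trans agr_sym by blast
      then show "q z = q x" using x z by (simp add: q_def)
    qed
  qed
  have proj: "projD m Em Ep q"
    unfolding projD_def using qCX q01 by (auto simp: q_def)
  have nz: "(\<lambda>x. q x * f x) \<noteq> (\<lambda>_. 0)" if f: "f \<in> Acell m Em Ep l" "f \<noteq> (\<lambda>_. 0)" for f
  proof -
    obtain x where fx: "f x \<noteq> 0" using f(2) by auto
    then have x: "x \<in> Xplus m Em Ep" using f(1) by (auto simp: Acell_def)
    define c where "c = (fst (omega0 m Em Ep x) l, rev (map (snd (omega0 m Em Ep x)) [0..<l]))"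
    have cC: "c \<in> C" using key_in_C[OF lb x] by (simp add: C_def c_def)
    have pU: "pp c \<in> U_X m Em Ep l (fst c) (snd c)" using P1 cC unfolding pp_def C_def by auto
    have pX: "pp c \<in> Xplus m Em Ep" using pU UX_iff[OF lb] by blast
    have "cellrel l (omega0 m Em Ep (pp c)) (omega0 m Em Ep x)"
      by (rule cell_of_UX[OF pU x]) (simp_all add: c_def)
    then have "f (pp c) = f x" using f(1) pX x by (simp add: Acell_def)
    moreover have "q (pp c) = 1" using pX cC agr_refl by (auto simp: q_def)
    ultimately have "q (pp c) * f (pp c) \<noteq> 0" using fx by simp
    then show ?thesis by (metis (mono_tags))
  qed
  have qq: "q x * q ((shift ^^ n) x) = 0" if n: "n \<in> {1..k}" for n x
  proof (rule ccontr)
    assume "q x * q ((shift ^^ n) x) \<noteq> 0"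
    then have "q x \<noteq> 0" "q ((shift ^^ n) x) \<noteq> 0" by auto
    then obtain c c' where c: "c \<in> C" "agr D (pp c) x" and c': "c' \<in> C" "agr D (pp c') ((shift ^^ n) x)"
      by (auto simp: q_def split: if_splits)
    define t where "t = (c, c', n)"
    have tT: "t \<in> T" using c c' n by (simp add: T_def t_def)
    have "dd t \<le> (\<Sum>t\<in>T. dd t)" using nat_le_sum[OF fT tT] .
    then have le: "dd t \<le> D - n" using n unfolding D_def by simp linarith
    have "agr (D - n) ((shift ^^ n) (pp c)) ((shift ^^ n) x)" using agr_shift[OF c(2)] .
    moreover have "agr (D - n) (pp c') ((shift ^^ n) x)" using agr_mono[OF c'(2)] by simp
    ultimately have "agr (D - n) ((shift ^^ n) (pp c)) (pp c')" using agr_trans agr_sym by blast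
    then have "agr (dd t) ((shift ^^ n) (pp c)) (pp c')" using agr_mono le by blast
    then show False using ddP[OF tT] by (simp add: t_def)
  qed
  have ph: "q x * phi m Em Ep n q x = 0" if n: "n \<in> {1..k}" for n x
  proof (cases "q x = 0")
    case True then show ?thesis by simp
  next
    case False
    then have z: "q ((shift ^^ n) x) = 0" using qq[OF n, of x] by simp
    have "phi m Em Ep n q x = 0"
      unfolding phi_def z by simp
    then show ?thesis by simp
  qed
  show ?thesis using proj nz ph by (intro exI[of _ q]) (auto simp: mult.commute)
qed

lemma triple:
  assumes sc: "sigma_condI m Em Ep"
  shows "triple_condI m Em Ep"
  unfolding triple_condI_def
proof (intro exI[of _ "Acell m Em Ep"] conjI allI impI ballI)
  fix l :: nat
  show "cstar_sub m Em Ep (Acell m Em Ep l)" by (rule cstar_Acell[OF lb])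
  show "Acell m Em Ep l \<subseteq> A_L m Em Ep" by (rule Acell_AL[OF lb])
  show "unitX m Em Ep \<in> Acell m Em Ep l" by (rule unitX_Acell[OF lb])
  show "Acell m Em Ep l \<subseteq> Acell m Em Ep (Suc l)" using Acell_mono[OF lb] by simp
next
  fix f :: "('a, 'b) pt \<Rightarrow> complex" and e :: real
  assume "f \<in> A_L m Em Ep" "0 < e"
  then show "\<exists>l\<ge>1. \<exists>g\<in>Acell m Em Ep l. \<forall>x\<in>Xplus m Em Ep. cmod (f x - g x) < e"
    by (rule AL_dense[OF lb])
next
  fix l :: nat and a :: 'b and f
  assume "f \<in> Acell m Em Ep l"
  then show "rho m Em Ep a f \<in> Acell m Em Ep (Suc l)" by (rule rho_Acell[OF lb])
next
  fix k l :: nat assume "1 \<le> k \<and> k \<le> l"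
  then show "\<exists>q. projD m Em Ep q \<and>
               (\<forall>f\<in>Acell m Em Ep l. \<forall>x. q x * f x = f x * q x) \<and>
               (\<forall>f\<in>Acell m Em Ep l. f \<noteq> (\<lambda>_. 0) \<longrightarrow> (\<lambda>x. q x * f x) \<noteq> (\<lambda>_. 0)) \<and>
               (\<forall>n\<in>{1..k}. \<forall>x. q x * phi m Em Ep n q x = 0)"
    using q_exists[OF sc] by blast
qed

end

context
  fixes m :: "nat \<Rightarrow> nat"
    and Em :: "nat \<Rightarrow> nat \<Rightarrow> 'a::finite \<Rightarrow> nat \<Rightarrow> bool"
    and Ep :: "nat \<Rightarrow> nat \<Rightarrow> 'b::finite \<Rightarrow> nat \<Rightarrow> bool"
  assumes lb: "lambda_bisystem m Em Ep"
begin

lemma shift_comp: "shift ((shift ^^ n) x) = (shift ^^ Suc n) x"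
  by simp

lemma build_chain:
  assumes x: "x \<in> Xplus m Em Ep" and y: "y \<in> Xplus m Em Ep"
    and cy: "cellrel l (omega0 m Em Ep y) (omega0 m Em Ep ((shift ^^ N) x))"
    and lN: "N < l"
  shows "j \<le> N \<Longrightarrow> \<exists>P\<in>Xplus m Em Ep. (shift ^^ j) P = y \<and>
     (\<forall>i\<le>j. cellrel (l - j + i) (omega0 m Em Ep ((shift ^^ i) P)) (omega0 m Em Ep ((shift ^^ (N - j + i)) x))) \<and>
     (\<forall>i<j. fst (P i) = fst (x (N - j + i)))"
proof (induction j)
  case 0
  then show ?case using y cy by (intro bexI[of _ y]) auto
next
  case (Suc j)
  then obtain P where P: "P \<in> Xplus m Em Ep" "(shift ^^ j) P = y"
    "\<forall>i\<le>j. cellrel (l - j + i) (omega0 m Em Ep ((shift ^^ i) P)) (omega0 m Em Ep ((shift ^^ (N - j + i)) x))"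
    "\<forall>i<j. fst (P i) = fst (x (N - j + i))" by auto
  define r where "r = N - Suc j"
  have rj: "N - j = Suc r" using Suc.prems r_def by simp
  define x' where "x' = (shift ^^ r) x"
  have x'X: "x' \<in> Xplus m Em Ep" using shiftpow_X[OF lb x] by (simp add: x'_def)
  have sx': "shift x' = (shift ^^ (N - j)) x" using rj by (simp add: x'_def)
  define a where "a = fst (x' 0)"
  have a_eq: "a = fst (x r)" by (simp add: a_def x'_def shift_pow_apply)
  have admx: "adm Ep a (omega0 m Em Ep (shift x'))" unfolding a_def by (rule adm_X[OF lb x'X])
  have c0: "cellrel (l - j) (omega0 m Em Ep P) (omega0 m Em Ep (shift x'))"
    using P(3)[rule_format, of 0] sx' by simp
  have lj: "1 \<le> l - j" using Suc.prems lN by simp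
  have oms: "omega0 m Em Ep P \<in> Omega m Em" "omega0 m Em Ep (shift x') \<in> Omega m Em"
    using w0_prop[OF lb P(1)] w0_prop[OF lb shift_X[OF lb x'X, THEN conjunct1]] by auto
  have c0': "cellrel (l - j) (omega0 m Em Ep (shift x')) (omega0 m Em Ep P)"
    using c0 by (auto simp: cellrel_def)
  have admP: "adm Ep a (omega0 m Em Ep P)"
    by (rule adm_cell[OF lb oms(2,1) c0' lj admx])
  define P' where "P' = pre m Em Ep a P"
  have P'X: "P' \<in> Xplus m Em Ep" using pre_X(1)[OF lb P(1) admP] by (simp add: P'_def)
  have sP': "shift P' = P" by (simp add: P'_def shift_pre[OF lb])
  have spow: "(shift ^^ Suc i) P' = (shift ^^ i) P" for i
    by (simp only: funpow_Suc_right comp_apply sP')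
  have E1: "EplusL Ep (omega0 m Em Ep P') a (omega0 m Em Ep P)"
    using pre_X(2)[OF lb P(1) admP] by (simp add: P'_def)
  have E2: "EplusL Ep (omega0 m Em Ep x') a (omega0 m Em Ep (shift x'))"
    using w0_prop[OF lb x'X] shift_X[OF lb x'X] by (simp add: a_def)
  have lj2: "l - j = Suc (l - Suc j)" using Suc.prems lN by simp
  have cP': "cellrel (l - Suc j) (omega0 m Em Ep P') (omega0 m Em Ep x')"
    using cell_pre[OF lb E1 E2] c0 lj2 by simp
  show ?case
  proof (intro bexI[of _ P'] conjI allI impI)
    show "P' \<in> Xplus m Em Ep" by (rule P'X)
    show "(shift ^^ Suc j) P' = y" using spow P(2) by simp
  next
    fix i assume i: "i \<le> Suc j"
    show "cellrel (l - Suc j + i) (omega0 m Em Ep ((shift ^^ i) P')) (omega0 m Em Ep ((shift ^^ (N - Suc j + i)) x))"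
    proof (cases i)
      case 0 then show ?thesis using cP' by (simp add: x'_def r_def)
    next
      case (Suc i')
      have "l - Suc j + i = l - j + i'" using Suc i Suc.prems lN by simp
      moreover have "N - Suc j + i = N - j + i'" using Suc i Suc.prems by simp
      moreover have "cellrel (l - j + i') (omega0 m Em Ep ((shift ^^ i') P)) (omega0 m Em Ep ((shift ^^ (N - j + i')) x))"
        using P(3) i Suc by simp
      moreover have "(shift ^^ i) P' = (shift ^^ i') P" using spow Suc by simp
      ultimately show ?thesis by (simp only:)
    qed
  next
    fix i assume i: "i < Suc j"
    show "fst (P' i) = fst (x (N - Suc j + i))"
    proof (cases i)
      case 0 then show ?thesis using a_eq by (simp add: P'_def pre_0[OF lb] r_def)
    next
      case (Suc i')
      have "P' i = shift P' i'" using Suc by (simp add: shift_def)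
      then have "P' i = P i'" using sP' by simp
      moreover have "N - Suc j + i = N - j + i'" using Suc i Suc.prems by simp
      moreover have "fst (P i') = fst (x (N - j + i'))" using P(4) Suc i by simp
      ultimately show ?thesis by (simp only:)
    qed
  qed
qed

lemma core_free:
  assumes sc: "sigma_condI m Em Ep" and x: "x \<in> Xplus m Em Ep" and ab: "a < b"
    and H: "\<forall>z\<in>Xplus m Em Ep. agr d x z \<longrightarrow> (shift ^^ a) z = (shift ^^ b) z"
  shows False
proof -
  define k where "k = b - a"
  define N where "N = d + a"
  define l where "l = N + d + k"
  have k1: "1 \<le> k" "k \<le> l" using ab by (auto simp: k_def l_def)
  obtain pts where P1: "\<forall>i<m l. \<forall>xi\<in>Fw m Em l i. pts i xi \<in> U_X m Em Ep l i xi"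
    and P2: "\<forall>i<m l. \<forall>j<m l. \<forall>xi\<in>Fw m Em l i. \<forall>eta\<in>Fw m Em l j. \<forall>n\<in>{1..k}.
                   (shift ^^ n) (pts i xi) \<noteq> pts j eta"
    using sc k1 unfolding sigma_condI_def by blast
  define xN where "xN = (shift ^^ N) x"
  have xNX: "xN \<in> Xplus m Em Ep" using shiftpow_X[OF lb x] by (simp add: xN_def)
  define i where "i = fst (omega0 m Em Ep xN) l"
  define xi where "xi = rev (map (snd (omega0 m Em Ep xN)) [0..<l])"
  have iC: "i < m l" "xi \<in> Fw m Em l i" using key_in_C[OF lb xNX] by (simp_all add: i_def xi_def)
  define y where "y = pts i xi"
  have yU: "y \<in> U_X m Em Ep l i xi" using P1 iC by (simp add: y_def)
  have yX: "y \<in> Xplus m Em Ep" using yU UX_iff[OF lb] by blast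
  have cy: "cellrel l (omega0 m Em Ep y) (omega0 m Em Ep ((shift ^^ N) x))"
    using cell_of_UX[OF lb yU xNX i_def xi_def] by (simp add: xN_def)
  have ky: "(shift ^^ k) y \<noteq> y" using P2 iC k1 by (simp add: y_def)
  have lN: "N < l" using k1 by (simp add: l_def)
  obtain z where z: "z \<in> Xplus m Em Ep" "(shift ^^ N) z = y"
    "\<forall>i\<le>N. cellrel (l - N + i) (omega0 m Em Ep ((shift ^^ i) z)) (omega0 m Em Ep ((shift ^^ i) x))"
    "\<forall>i<N. fst (z i) = fst (x i)"
    using build_chain[OF x yX cy lN, of N] by auto
  have "agr d x z"
    unfolding agr_def
  proof (intro allI impI conjI)
    fix i n assume i: "i < d"
    then show "fst (z i) = fst (x i)" using z(4) by (simp add: N_def)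
    assume n: "n < d"
    have c: "cellrel (l - N + Suc i) (omega0 m Em Ep ((shift ^^ Suc i) z)) (omega0 m Em Ep ((shift ^^ Suc i) x))"
    proof -
      have "Suc i \<le> N" using i by (simp add: N_def)
      then show ?thesis using z(3) by blast
    qed
    have om: "omega0 m Em Ep ((shift ^^ Suc i) z) \<in> Omega m Em" "omega0 m Em Ep ((shift ^^ Suc i) x) \<in> Omega m Em"
      using w0_prop[OF lb] shiftpow_X[OF lb] z(1) x by blast+
    have le: "n \<le> l - N + Suc i" using n by (simp add: l_def)
    have c': "cellrel n (omega0 m Em Ep ((shift ^^ Suc i) z)) (omega0 m Em Ep ((shift ^^ Suc i) x))"
      by (rule cell_down[OF lb om c le])
    have "snd (z i) = omega0 m Em Ep ((shift ^^ Suc i) z)" "snd (x i) = omega0 m Em Ep ((shift ^^ Suc i) x)"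
      using w0_shiftpow[OF lb z(1)] w0_shiftpow[OF lb x] by auto
    moreover have "n < l - N + Suc i" using n by (simp add: l_def)
    ultimately show "fst (snd (z i)) n = fst (snd (x i)) n" "snd (snd (z i)) n = snd (snd (x i)) n"
      using c c' by (auto simp: cellrel_def)
  qed
  then have "(shift ^^ a) z = (shift ^^ b) z" using H z(1) by blast
  then have "(shift ^^ d) ((shift ^^ a) z) = (shift ^^ d) ((shift ^^ b) z)" by simp
  moreover have "(shift ^^ N) z = (shift ^^ d) ((shift ^^ a) z)"
    unfolding N_def by (simp only: funpow_add comp_apply)
  moreover have "(shift ^^ k) ((shift ^^ N) z) = (shift ^^ d) ((shift ^^ b) z)"
  proof -
    have kN: "k + N = d + b" using ab by (simp add: k_def N_def)
    have "(shift ^^ k) ((shift ^^ N) z) = (shift ^^ (k + N)) z" by (simp only: funpow_add comp_apply)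
    also have "\<dots> = (shift ^^ (d + b)) z" by (simp only: kN)
    also have "\<dots> = (shift ^^ d) ((shift ^^ b) z)" by (simp only: funpow_add comp_apply)
    finally show ?thesis .
  qed
  ultimately have "(shift ^^ N) z = (shift ^^ k) ((shift ^^ N) z)" by simp
  then show False using ky z(2) by simp
qed

lemma ess_free:
  assumes sc: "sigma_condI m Em Ep"
  shows "essentially_free m Em Ep"
  unfolding essentially_free_def
proof (intro allI impI)
  fix p q :: nat assume pq: "p \<noteq> q"
  show "Xtop m Em Ep interior_of {x \<in> Xplus m Em Ep. (shift ^^ p) x = (shift ^^ q) x} = {}"
  proof (rule ccontr)
    assume "Xtop m Em Ep interior_of {x \<in> Xplus m Em Ep. (shift ^^ p) x = (shift ^^ q) x} \<noteq> {}"
    then obtain x T where T: "openin (Xtop m Em Ep) T" "x \<in> T" "T \<subseteq> {x \<in> Xplus m Em Ep. (shift ^^ p) x = (shift ^^ q) x}"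
      unfolding interior_of_def by blast
    obtain S where S: "openin Tbig S" "T = S \<inter> Xplus m Em Ep"
      using T(1) unfolding Xtop_eq openin_subtopology by blast
    have xS: "x \<in> S" and xX: "x \<in> Xplus m Em Ep" using T(2) S(2) by auto
    obtain d where d: "\<forall>z. agr d x z \<longrightarrow> z \<in> S" using open_agr[OF S(1) xS] by blast
    have H: "\<forall>z\<in>Xplus m Em Ep. agr d x z \<longrightarrow> (shift ^^ p) z = (shift ^^ q) z"
      using d S(2) T(3) by blast
    show False
    proof (cases "p < q")
      case True
      then show False using core_free[OF sc xX True H] by blast
    next
      case False
      then have "q < p" using pq by simp
      moreover have "\<forall>z\<in>Xplus m Em Ep. agr d x z \<longrightarrow> (shift ^^ q) z = (shift ^^ p) z" using H by metis
      ultimately show False using core_free[OF sc xX] by blast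
    qed
  qed
qed

end

theorem proposition8p6:
  fixes m :: "nat \<Rightarrow> nat"
    and Em :: "nat \<Rightarrow> nat \<Rightarrow> 'a::finite \<Rightarrow> nat \<Rightarrow> bool"
    and Ep :: "nat \<Rightarrow> nat \<Rightarrow> 'b::finite \<Rightarrow> nat \<Rightarrow> bool"
  assumes "lambda_bisystem m Em Ep"
    and "sigma_condI m Em Ep"
  shows "essentially_free m Em Ep \<and> triple_condI m Em Ep"
  using ess_free[OF assms(1,2)] triple[OF assms(1,2)] by blast

end
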